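(* Let $W$ be a graphon satisfying the Regularity Condition. For every $y\in(0,1)$ there exists $C>0$ such that for all $n\ge2$ and $u\in[0,1]$, with $d=D(y)$, $$H_n(y,u)=\frac{d-W(y,u)}{D'(y)}+R_n(u),\qquad |R_n(u)|\le Cn^{-1/4}.$$ Moreover, for all $y\in(0,1)$ and $u\in[0,1]$ with $u\ne y$: $|H_n^\star(y,u)|\le1$ for all $n\ge2$, and $\lim_{n\to\infty}H_n^\star(y,u)=\mathbf 1_{\{u\le y\}}-y$.
   Context: A graphon is a symmetric measurable $W:[0,1]^2\to[0,1]$; $D(x)=\int_0^1W(x,y)dy$. Regularity Condition: $W\in\mathcal{C}^3([0,1]^2)$, $D'>0$, $W\le1-\varepsilon_0$ and $D\ge\varepsilon_0$ for some $\varepsilon_0\in(0,1/2)$. $X=(X_i)$ i.i.d. uniform; $G_n$ is the graph on $[n]$ where, conditionally on $X$, $\{i,j\}$ is an edge independently with probability $W(X_i,X_j)$; $D_i^{(n)}$ is the degree of $i$ in $G_n$ divided by $n-1$. With $d=D(y)$: $c_n(y)=\mathbb P(D_1^{(n+1)}\le d)$, $H_n(y,u)=n\big(\mathbb E[\mathbf 1_{\{D_1^{(n+1)}\le d\}}\mid X_2=u]-c_n(y)\big)$, $H_n^\star(y,u)=\mathbb E[\mathbf 1_{\{D_1^{(n+1)}\le d\}}\mid X_1=u]-c_n(y)$. *)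

theory Defs
  imports "HOL-Probability.Probability"
begin

definition sq01 :: "(real \<times> real) set" where
  "sq01 = {0..1} \<times> {0..1}"

definition graphon :: "(real \<Rightarrow> real \<Rightarrow> real) \<Rightarrow> bool" where
  "graphon W \<longleftrightarrow>
     (\<lambda>(x, y). W x y) \<in> borel_measurable (restrict_space borel sq01) \<and>
     (\<forall>x\<in>{0..1}. \<forall>y\<in>{0..1}. W x y = W y x \<and> 0 \<le> W x y \<and> W x y \<le> 1)"

definition Dfun :: "(real \<Rightarrow> real \<Rightarrow> real) \<Rightarrow> real \<Rightarrow> real" where
  "Dfun W x = integral {0..1} (\<lambda>y. W x y)"

definition C3_on :: "(real \<times> real) set \<Rightarrow> (real \<times> real \<Rightarrow> real) \<Rightarrow> bool" where
  "C3_on S f \<longleftrightarrow>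
    (\<exists>(f1 :: real \<times> real \<Rightarrow> ((real \<times> real) \<Rightarrow>\<^sub>L real))
      (f2 :: real \<times> real \<Rightarrow> ((real \<times> real) \<Rightarrow>\<^sub>L ((real \<times> real) \<Rightarrow>\<^sub>L real)))
      (f3 :: real \<times> real \<Rightarrow> ((real \<times> real) \<Rightarrow>\<^sub>L ((real \<times> real) \<Rightarrow>\<^sub>L ((real \<times> real) \<Rightarrow>\<^sub>L real)))).
       (\<forall>x\<in>S. (f has_derivative blinfun_apply (f1 x)) (at x within S) \<and>
               (f1 has_derivative blinfun_apply (f2 x)) (at x within S) \<and>
               (f2 has_derivative blinfun_apply (f3 x)) (at x within S)) \<and>
       continuous_on S f3)"

definition regular_graphon :: "(real \<Rightarrow> real \<Rightarrow> real) \<Rightarrow> bool" where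
  "regular_graphon W \<longleftrightarrow>
     C3_on sq01 (\<lambda>(x, y). W x y) \<and>
     (\<forall>x\<in>{0..1}. \<exists>d'. (Dfun W has_real_derivative d') (at x within {0..1}) \<and> d' > 0) \<and>
     (\<exists>\<epsilon>0::real. 0 < \<epsilon>0 \<and> \<epsilon>0 < 1/2 \<and>
        (\<forall>x\<in>{0..1}. \<forall>y\<in>{0..1}. W x y \<le> 1 - \<epsilon>0) \<and>
        (\<forall>x\<in>{0..1}. Dfun W x \<ge> \<epsilon>0))"

text \<open>Sampling model for G_m on vertex set {1..m}: latent positions X_i i.i.d. uniform on
  [0,1], and independent uniforms U_{ij} (i<j); {i,j} is an edge iff U_{ij} < W(X_i,X_j).
  Conditionally on X this gives independent edges with probability W(X_i,X_j).\<close>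
definition U01 :: "real measure" where
  "U01 = restrict_space lborel {0..1}"

definition pairs :: "nat \<Rightarrow> (nat \<times> nat) set" where
  "pairs m = {(i, j). 1 \<le> i \<and> i < j \<and> j \<le> m}"

definition model :: "nat \<Rightarrow> ((nat \<Rightarrow> real) \<times> (nat \<times> nat \<Rightarrow> real)) measure" where
  "model m = PiM {1..m} (\<lambda>_. U01) \<Otimes>\<^sub>M PiM (pairs m) (\<lambda>_. U01)"

definition edge :: "(real \<Rightarrow> real \<Rightarrow> real) \<Rightarrow> (nat \<Rightarrow> real) \<Rightarrow> (nat \<times> nat \<Rightarrow> real)
    \<Rightarrow> nat \<Rightarrow> nat \<Rightarrow> bool" where
  "edge W X U i j \<longleftrightarrow> i \<noteq> j \<and> U (min i j, max i j) < W (X i) (X j)"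

definition normdeg :: "(real \<Rightarrow> real \<Rightarrow> real) \<Rightarrow> nat \<Rightarrow> (nat \<Rightarrow> real) \<Rightarrow> (nat \<times> nat \<Rightarrow> real)
    \<Rightarrow> nat \<Rightarrow> real" where
  "normdeg W m X U i = real (card {j \<in> {1..m}. edge W X U i j}) / real (m - 1)"

definition c_n :: "(real \<Rightarrow> real \<Rightarrow> real) \<Rightarrow> nat \<Rightarrow> real \<Rightarrow> real" where
  "c_n W n y = measure (model (n+1))
     {\<omega> \<in> space (model (n+1)). normdeg W (n+1) (fst \<omega>) (snd \<omega>) 1 \<le> Dfun W y}"

text \<open>P(D_1^{(n+1)} \<le> D(y) | X_k = u), the canonical (pinned) version: X_k is set to u
  and all other randomness is integrated out.\<close>
definition cond_prob :: "(real \<Rightarrow> real \<Rightarrow> real) \<Rightarrow> nat \<Rightarrow> nat \<Rightarrow> real \<Rightarrow> real \<Rightarrow> real" where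
  "cond_prob W n k u y = measure (model (n+1))
     {\<omega> \<in> space (model (n+1)). normdeg W (n+1) ((fst \<omega>)(k := u)) (snd \<omega>) 1 \<le> Dfun W y}"

definition H_n :: "(real \<Rightarrow> real \<Rightarrow> real) \<Rightarrow> nat \<Rightarrow> real \<Rightarrow> real \<Rightarrow> real" where
  "H_n W n y u = real n * (cond_prob W n 2 u y - c_n W n y)"

definition H_star :: "(real \<Rightarrow> real \<Rightarrow> real) \<Rightarrow> nat \<Rightarrow> real \<Rightarrow> real \<Rightarrow> real" where
  "H_star W n y u = cond_prob W n 1 u y - c_n W n y"

end

theory Submission
  imports Defs
begin


definition Fc :: "nat \<Rightarrow> real \<Rightarrow> nat \<Rightarrow> real" where
  "Fc N p k = (\<Sum>i\<le>k. real (N choose i) * p^i * (1-p)^(N-i))"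

lemma Fc_0: "Fc N p 0 = (1-p)^N" by (simp add: Fc_def)

lemma Fc_step: "Fc N p (Suc k) = Fc N p k + real (N choose Suc k) * p^Suc k * (1-p)^(N - Suc k)"
  by (simp add: Fc_def)

lemma Fc_Suc: "Fc (Suc N) p k = p * (if k = 0 then 0 else Fc N p (k-1)) + (1-p) * Fc N p k"
proof (induction k)
  case 0 then show ?case by (simp add: Fc_0)
next
  case (Suc k)
  have IH: "Fc (Suc N) p k = p * (if k = 0 then 0 else Fc N p (k-1)) + (1-p) * Fc N p k" by fact
  have A: "(if k = 0 then 0 else Fc N p (k-1)) + real (N choose k) * p^k * (1-p)^(N-k) = Fc N p k"
    by (cases k) (auto simp: Fc_0 Fc_step)
  show ?case
  proof (cases "Suc k \<le> N")
    case True
    then obtain r where r: "N - k = Suc r" "N - Suc k = r" by (metis Suc_diff_le diff_Suc_Suc not_less_eq_eq)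
    have "Fc (Suc N) p (Suc k) = Fc (Suc N) p k + real (Suc N choose Suc k) * p^Suc k * (1-p)^(N-k)"
      by (simp add: Fc_step)
    also have "\<dots> = p * (if k = 0 then 0 else Fc N p (k-1)) + (1-p) * Fc N p k
        + (real (N choose k) + real (N choose Suc k)) * p^Suc k * (1-p)^(N-k)"
      by (simp add: IH)
    also have "\<dots> = p * ((if k = 0 then 0 else Fc N p (k-1)) + real (N choose k) * p^k * (1-p)^(N-k))
        + (1-p) * (Fc N p k + real (N choose Suc k) * p^Suc k * (1-p)^(N - Suc k))"
      using r by (simp add: algebra_simps)
    also have "\<dots> = p * Fc N p k + (1-p) * Fc N p (Suc k)"
      by (simp add: A Fc_step)
    finally show ?thesis by simp
  next
    case False
    then have z: "N choose Suc k = 0" by simp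
    have e: "N - k = 0 \<or> N = k" using False by auto
    have "Fc (Suc N) p (Suc k) = Fc (Suc N) p k + real (Suc N choose Suc k) * p^Suc k * (1-p)^(N-k)"
      by (simp add: Fc_step)
    also have "\<dots> = p * (if k = 0 then 0 else Fc N p (k-1)) + (1-p) * Fc N p k
        + real (N choose k) * p^Suc k * (1-p)^(N-k)"
      by (simp add: IH z)
    also have "\<dots> = p * ((if k = 0 then 0 else Fc N p (k-1)) + real (N choose k) * p^k * (1-p)^(N-k))
        + (1-p) * Fc N p k"
      by (simp add: algebra_simps)
    also have "\<dots> = p * Fc N p k + (1-p) * Fc N p (Suc k)"
      by (simp add: A Fc_step z)
    finally show ?thesis by simp
  qed
qed

lemma Fc_pmf: assumes "0 \<le> p" "p \<le> 1"
  shows "Fc N p k = measure_pmf.prob (binomial_pmf N p) {..k}"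
  using assms by (simp add: Fc_def measure_measure_pmf_finite)

lemma Fc_bounds: assumes "0 \<le> p" "p \<le> 1" shows "0 \<le> Fc N p k" "Fc N p k \<le> 1"
  using assms by (simp_all add: Fc_pmf measure_nonneg)

lemma Fc_deriv:
  assumes "k < N"
  shows "((\<lambda>p. Fc N p k) has_real_derivative
     (- (real N * real ((N-1) choose k) * p^k * (1-p)^(N-1-k)))) (at p)"
  using assms
proof (induction k)
  case 0
  then obtain r where r: "N = Suc r" by (cases N) auto
  have d1: "((\<lambda>p. 1-p) has_real_derivative -1) (at p)"
    by (auto intro!: derivative_eq_intros)
  have "((\<lambda>p. (1-p) ^ Suc r) has_real_derivative (- (real (Suc r) * (1-p)^r))) (at p)"
    using DERIV_power[OF d1, of "Suc r"] by simp
  then show ?case unfolding Fc_0 r by simp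
next
  case (Suc k)
  then obtain r where r: "N = Suc (Suc k) + r" using less_imp_Suc_add[of "Suc k" N] by auto
  have IH: "((\<lambda>p. Fc N p k) has_real_derivative
     (- (real N * real ((N-1) choose k) * p^k * (1-p)^(N-1-k)))) (at p)"
    using Suc by simp
  have e1: "real (N choose Suc k) * real (Suc k) = real N * real ((N-1) choose k)"
    using binomial_absorption[of k N] by (metis mult.commute of_nat_mult)
  have e2: "real (N choose Suc k) * real (Suc r) = real N * real ((N-1) choose Suc k)"
  proof -
    have "N - Suc k = Suc r" using r by simp
    then show ?thesis using binomial_absorb_comp[of N "Suc k"] by (metis mult.commute of_nat_mult)
  qed
  have d1: "((\<lambda>p. 1-p) has_real_derivative -1) (at p)"
    by (auto intro!: derivative_eq_intros)
  have da: "((\<lambda>p. (1-p) ^ Suc r) has_real_derivative (- (real (Suc r) * (1-p)^r))) (at p)"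
    using DERIV_power[OF d1, of "Suc r"] by simp
  have db: "((\<lambda>p. p ^ Suc k) has_real_derivative (real (Suc k) * p^k)) (at p)"
    using DERIV_pow[of "Suc k" p] by simp
  have dt: "((\<lambda>p. p^Suc k * (1-p)^Suc r) has_real_derivative
      (real (Suc k) * p^k * (1-p)^Suc r - real (Suc r) * p^Suc k * (1-p)^r)) (at p)"
    by (rule DERIV_cong[OF DERIV_mult[OF db da]]) (simp add: algebra_simps)
  have dt2: "((\<lambda>p. real (N choose Suc k) * (p^Suc k * (1-p)^Suc r)) has_real_derivative
      real (N choose Suc k) * (real (Suc k) * p^k * (1-p)^Suc r - real (Suc r) * p^Suc k * (1-p)^r)) (at p)"
    by (rule DERIV_cmult[OF dt])
  have ex: "N - 1 - k = Suc r" "N - Suc k = Suc r" "N - 1 - Suc k = r" using r by auto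
  have "((\<lambda>p. Fc N p k + real (N choose Suc k) * (p^Suc k * (1-p)^Suc r)) has_real_derivative
     (- (real N * real ((N-1) choose k) * p^k * (1-p)^(N-1-k))) +
      real (N choose Suc k) * (real (Suc k) * p^k * (1-p)^Suc r - real (Suc r) * p^Suc k * (1-p)^r)) (at p)"
    by (rule DERIV_add[OF IH dt2])
  moreover have "(- (real N * real ((N-1) choose k) * p^k * (1-p)^(N-1-k))) +
      real (N choose Suc k) * (real (Suc k) * p^k * (1-p)^Suc r - real (Suc r) * p^Suc k * (1-p)^r)
     = - (real N * real ((N-1) choose Suc k) * p^Suc k * (1-p)^(N-1-Suc k))"
  proof -
    have "real (N choose Suc k) * (real (Suc k) * p^k * (1-p)^Suc r - real (Suc r) * p^Suc k * (1-p)^r)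
      = (real (N choose Suc k) * real (Suc k)) * p^k * (1-p)^Suc r - (real (N choose Suc k) * real (Suc r)) * p^Suc k * (1-p)^r"
      by (simp add: algebra_simps)
    also have "\<dots> = real N * real ((N-1) choose k) * p^k * (1-p)^Suc r - real N * real ((N-1) choose Suc k) * p^Suc k * (1-p)^r"
      by (simp only: e1 e2)
    finally show ?thesis unfolding ex by simp
  qed
  ultimately show ?case unfolding Fc_step ex by (simp add: mult.assoc)
qed

lemma Fc_upper_tail:
  assumes p: "0 \<le> p" "p \<le> 1" and n: "n > 0" and e: "\<epsilon> \<ge> 0"
    and k: "p + \<epsilon> \<le> (real k + 1) / real n"
  shows "1 - Fc n p k \<le> exp (-2 * real n * \<epsilon>^2)"
proof -
  have "1 - Fc n p k = measure_pmf.prob (binomial_pmf n p) (UNIV - {..k})"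
    using p measure_pmf.prob_compl[of "{..k}" "binomial_pmf n p"] by (simp add: Fc_pmf)
  also have "\<dots> \<le> measure_pmf.prob (binomial_pmf n p) {x. real x / real n \<ge> p + \<epsilon>}"
  proof (rule measure_pmf.finite_measure_mono)
    show "UNIV - {..k} \<subseteq> {x. real x / real n \<ge> p + \<epsilon>}"
    proof
      fix x assume "x \<in> UNIV - {..k}"
      then have "real k + 1 \<le> real x" by auto
      then have "(real k + 1) / real n \<le> real x / real n" using n by (simp add: divide_right_mono)
      then show "x \<in> {x. real x / real n \<ge> p + \<epsilon>}" using k by simp
    qed
  qed simp
  also have "\<dots> \<le> exp (-2 * real n * \<epsilon>^2)" using binomial_distribution.prob_ge'[of p n \<epsilon>] p n e by (simp add: binomial_distribution_def)
  finally show ?thesis .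
qed

lemma Fc_lower_tail:
  assumes p: "0 \<le> p" "p \<le> 1" and n: "n > 0" and e: "\<epsilon> \<ge> 0"
    and k: "real k / real n \<le> p - \<epsilon>"
  shows "Fc n p k \<le> exp (-2 * real n * \<epsilon>^2)"
proof -
  have "Fc n p k = measure_pmf.prob (binomial_pmf n p) {..k}"
    using p by (simp add: Fc_pmf)
  also have "\<dots> \<le> measure_pmf.prob (binomial_pmf n p) {x. real x / real n \<le> p - \<epsilon>}"
  proof (rule measure_pmf.finite_measure_mono)
    show "{..k} \<subseteq> {x. real x / real n \<le> p - \<epsilon>}"
    proof
      fix x assume "x \<in> {..k}"
      then have "real x \<le> real k" by auto
      then have "real x / real n \<le> real k / real n" using n by (simp add: divide_right_mono)
      then show "x \<in> {x. real x / real n \<le> p - \<epsilon>}" using k by simp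
    qed
  qed simp
  also have "\<dots> \<le> exp (-2 * real n * \<epsilon>^2)" using binomial_distribution.prob_le'[of p n \<epsilon>] p n e by (simp add: binomial_distribution_def)
  finally show ?thesis .
qed



lemma L0:
  fixes M :: "'i \<Rightarrow> 'a measure"
  assumes ps: "\<And>j. prob_space (M j)"
    and fin: "finite I" and i: "i \<in> I"
    and f[measurable]: "f \<in> borel_measurable (M i)"
    and g[measurable]: "g \<in> borel_measurable (PiM I M)"
    and inv: "\<And>x y. g (x(i:=y)) = g x"
  shows "(\<integral>\<^sup>+x. f (x i) * g x \<partial>PiM I M) = (\<integral>\<^sup>+y. f y \<partial>M i) * (\<integral>\<^sup>+x. g x \<partial>PiM I M)"
proof -
  interpret product_prob_space M
    using ps by (simp add: product_prob_space_def product_prob_space_axioms_def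
        product_sigma_finite_def prob_space_imp_sigma_finite)
  define I' where "I' = I - {i}"
  have II: "I = insert i I'" "i \<notin> I'" "finite I'" using i fin by (auto simp: I'_def)
  obtain y0 where y0: "y0 \<in> space (M i)" using prob_space.not_empty[OF ps[of i]] by auto
  have mrg: "(\<lambda>x. merge I' {i} (x, \<lambda>j\<in>{i}. y0)) \<in> measurable (PiM I' M) (PiM I M)"
  proof -
    have "(\<lambda>j\<in>{i}. y0) \<in> space (PiM {i} M)" using y0 by (auto simp: space_PiM)
    then have "(\<lambda>x. (x, \<lambda>j\<in>{i}. y0)) \<in> measurable (PiM I' M) (PiM I' M \<Otimes>\<^sub>M PiM {i} M)"
      by (intro measurable_Pair) auto
    from measurable_compose[OF this measurable_merge]
    show ?thesis using II by (simp add: insert_commute)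
  qed
  have gm': "g \<in> borel_measurable (PiM I' M)"
  proof (rule measurable_cong[THEN iffD1, OF _ measurable_compose[OF mrg g]])
    fix x assume x: "x \<in> space (PiM I' M)"
    have "merge I' {i} (x, \<lambda>j\<in>{i}. y0) = x(i := y0)"
    proof
      fix j show "merge I' {i} (x, \<lambda>j\<in>{i}. y0) j = (x(i := y0)) j"
        using x II by (auto simp: merge_def space_PiM PiE_def extensional_def)
    qed
    then show "g (merge I' {i} (x, \<lambda>j\<in>{i}. y0)) = g x" using inv by simp
  qed
  have fg: "(\<lambda>x. f (x i) * g x) \<in> borel_measurable (PiM I M)" using i by measurable
  have "(\<integral>\<^sup>+x. f (x i) * g x \<partial>PiM I M) =
      (\<integral>\<^sup>+x. (\<integral>\<^sup>+y. f ((x(i:=y)) i) * g (x(i:=y)) \<partial>M i) \<partial>PiM I' M)"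
    using fg unfolding II(1) by (intro product_nn_integral_insert) (use II in auto)
  also have "\<dots> = (\<integral>\<^sup>+x. (\<integral>\<^sup>+y. f y * g x \<partial>M i) \<partial>PiM I' M)"
    by (simp add: inv)
  also have "\<dots> = (\<integral>\<^sup>+x. (\<integral>\<^sup>+y. f y \<partial>M i) * g x \<partial>PiM I' M)"
    by (simp add: nn_integral_multc)
  also have "\<dots> = (\<integral>\<^sup>+y. f y \<partial>M i) * (\<integral>\<^sup>+x. g x \<partial>PiM I' M)"
    by (rule nn_integral_cmult[OF gm'])
  also have "(\<integral>\<^sup>+x. g x \<partial>PiM I' M) = (\<integral>\<^sup>+x. g x \<partial>PiM I M)"
  proof -
    have "(\<integral>\<^sup>+x. g x \<partial>PiM I M) = (\<integral>\<^sup>+x. (\<integral>\<^sup>+y. g (x(i:=y)) \<partial>M i) \<partial>PiM I' M)"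
      using g unfolding II(1) by (intro product_nn_integral_insert) (use II in auto)
    also have "\<dots> = (\<integral>\<^sup>+x. g x \<partial>PiM I' M)"
      by (simp add: inv prob_space.emeasure_space_1[OF ps])
    finally show ?thesis by simp
  qed
  finally show ?thesis .
qed


lemma L2:
  fixes M :: "'i \<Rightarrow> 'a measure" and N :: "'j \<Rightarrow> 'b measure" and f :: "'a \<Rightarrow> 'b \<Rightarrow> ennreal"
  assumes psM: "\<And>i. prob_space (M i)" and psN: "\<And>j. prob_space (N j)"
    and finI: "finite I" and finK: "finite K" and a: "a \<in> I" and b: "b \<in> K"
    and f[measurable]: "case_prod f \<in> borel_measurable (M a \<Otimes>\<^sub>M N b)"
    and G[measurable]: "G \<in> borel_measurable (PiM I M \<Otimes>\<^sub>M PiM K N)"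
    and invX: "\<And>X U s. G (X(a:=s), U) = G (X,U)"
    and invU: "\<And>X U t. G (X, U(b:=t)) = G (X,U)"
  shows "(\<integral>\<^sup>+\<omega>. f (fst \<omega> a) (snd \<omega> b) * G \<omega> \<partial>(PiM I M \<Otimes>\<^sub>M PiM K N)) =
         (\<integral>\<^sup>+z. f (fst z) (snd z) \<partial>(M a \<Otimes>\<^sub>M N b)) * (\<integral>\<^sup>+\<omega>. G \<omega> \<partial>(PiM I M \<Otimes>\<^sub>M PiM K N))"
proof -
  interpret PI: prob_space "PiM I M" by (intro prob_space_PiM psM)
  interpret PK: prob_space "PiM K N" by (intro prob_space_PiM psN)
  interpret PP: pair_sigma_finite "PiM I M" "PiM K N" ..
  interpret Ma: prob_space "M a" by (rule psM)
  interpret Nb: prob_space "N b" by (rule psN)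
  interpret MN: pair_sigma_finite "M a" "N b" ..
  have fG: "(\<lambda>\<omega>. f (fst \<omega> a) (snd \<omega> b) * G \<omega>) \<in> borel_measurable (PiM I M \<Otimes>\<^sub>M PiM K N)"
    using a b by measurable
  define \<phi> where "\<phi> s = (\<integral>\<^sup>+t. f s t \<partial>N b)" for s
  define \<Gamma> where "\<Gamma> X = (\<integral>\<^sup>+U. G (X,U) \<partial>PiM K N)" for X
  have \<phi>m: "\<phi> \<in> borel_measurable (M a)" unfolding \<phi>_def by measurable
  have \<Gamma>m: "\<Gamma> \<in> borel_measurable (PiM I M)" unfolding \<Gamma>_def by measurable
  have "(\<integral>\<^sup>+\<omega>. f (fst \<omega> a) (snd \<omega> b) * G \<omega> \<partial>(PiM I M \<Otimes>\<^sub>M PiM K N)) =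
     (\<integral>\<^sup>+X. (\<integral>\<^sup>+U. f (X a) (U b) * G (X,U) \<partial>PiM K N) \<partial>PiM I M)"
    using PK.nn_integral_fst[OF fG] by simp
  also have "\<dots> = (\<integral>\<^sup>+X. \<phi> (X a) * \<Gamma> X \<partial>PiM I M)"
  proof (rule nn_integral_cong)
    fix X assume X: "X \<in> space (PiM I M)"
    then have Xa: "X a \<in> space (M a)" using a by (auto simp: space_PiM)
    have m1: "f (X a) \<in> borel_measurable (N b)"
      using measurable_Pair2[OF f Xa] by simp
    have m2: "(\<lambda>U. G (X,U)) \<in> borel_measurable (PiM K N)"
      using measurable_Pair2[OF G X] by simp
    show "(\<integral>\<^sup>+U. f (X a) (U b) * G (X,U) \<partial>PiM K N) = \<phi> (X a) * \<Gamma> X"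
      unfolding \<phi>_def \<Gamma>_def
      by (rule L0[OF psN finK b m1 m2]) (simp add: invU)
  qed
  also have "\<dots> = (\<integral>\<^sup>+s. \<phi> s \<partial>M a) * (\<integral>\<^sup>+X. \<Gamma> X \<partial>PiM I M)"
    by (rule L0[OF psM finI a \<phi>m \<Gamma>m]) (simp add: \<Gamma>_def invX)
  also have "(\<integral>\<^sup>+s. \<phi> s \<partial>M a) = (\<integral>\<^sup>+z. f (fst z) (snd z) \<partial>(M a \<Otimes>\<^sub>M N b))"
    unfolding \<phi>_def using Nb.nn_integral_fst[of "\<lambda>z. f (fst z) (snd z)"] f by simp
  also have "(\<integral>\<^sup>+X. \<Gamma> X \<partial>PiM I M) = (\<integral>\<^sup>+\<omega>. G \<omega> \<partial>(PiM I M \<Otimes>\<^sub>M PiM K N))"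
    unfolding \<Gamma>_def using PK.nn_integral_fst[OF G] by simp
  finally show ?thesis .
qed


lemma ps_U01: "prob_space U01"
  unfolding U01_def by (rule prob_space_restrict_space) auto

lemma space_U01: "space U01 = {0..1}"
  by (simp add: U01_def space_restrict_space)

lemma id_U01[measurable]: "(\<lambda>x::real. x) \<in> borel_measurable U01"
  unfolding U01_def by (rule measurable_restrict_space1) simp

lemma ps_model: "prob_space (model m)"
  unfolding model_def
  by (intro prob_space_pair prob_space_PiM ps_U01)

lemma coordX[measurable]: "j \<in> {1..m} \<Longrightarrow> (\<lambda>\<omega>. fst \<omega> j) \<in> measurable (model m) U01"
  unfolding model_def by measurable

lemma coordU[measurable]: "p \<in> pairs m \<Longrightarrow> (\<lambda>\<omega>. snd \<omega> p) \<in> measurable (model m) U01"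
  unfolding model_def by measurable

lemma card_sum: "finite J \<Longrightarrow> real (card {j\<in>J. P j}) = (\<Sum>j\<in>J. if P j then 1 else 0)"
  by (simp add: sum.If_cases Int_def)

lemma cnt_meas:
  assumes J: "J \<subseteq> {2..m}" and w[measurable]: "w \<in> borel_measurable U01"
  shows "(\<lambda>\<omega>. real (card {j\<in>J. snd \<omega> (1,j) < w (fst \<omega> j)})) \<in> borel_measurable (model m)"
proof -
  have fin: "finite J" using J finite_subset by blast
  have "(\<lambda>\<omega>. \<Sum>j\<in>J. if snd \<omega> (1,j) < w (fst \<omega> j) then 1 else (0::real)) \<in> borel_measurable (model m)"
  proof (rule borel_measurable_sum)
    fix j assume "j \<in> J"
    then have j: "j \<in> {1..m}" "(1,j) \<in> pairs m" using J by (auto simp: pairs_def)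
    have [measurable]: "(\<lambda>\<omega>. fst \<omega> j) \<in> measurable (model m) U01" by (rule coordX[OF j(1)])
    have [measurable]: "(\<lambda>\<omega>. snd \<omega> (1,j)) \<in> measurable (model m) U01" by (rule coordU[OF j(2)])
    have [measurable]: "(\<lambda>\<omega>. snd \<omega> (1,j)) \<in> borel_measurable (model m)"
      using measurable_compose[OF coordU[OF j(2)] id_U01] by simp
    show "(\<lambda>\<omega>. if snd \<omega> (1,j) < w (fst \<omega> j) then 1 else (0::real)) \<in> borel_measurable (model m)"
      by measurable
  qed
  then show ?thesis using card_sum[OF fin] by simp
qed


lemma int_lt_U01:
  assumes c: "0 \<le> c" "c \<le> 1"
  shows "(\<integral>\<^sup>+t. (if t < c then 1 else 0) \<partial>U01) = ennreal c"
    and "(\<integral>\<^sup>+t. (if t < c then 0 else 1) \<partial>U01) = ennreal (1 - c)"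
proof -
  have "(\<integral>\<^sup>+t. (if t < c then 1 else 0) \<partial>U01) = (\<integral>\<^sup>+t. indicator {..<c} t \<partial>U01)"
    by (intro nn_integral_cong) (auto simp: indicator_def)
  also have "\<dots> = emeasure U01 ({..<c} \<inter> space U01)"
    by (rule nn_integral_indicator') (simp add: space_U01 U01_def sets_restrict_space_iff)
  also have "{..<c} \<inter> space U01 = {0..<c}" using c by (auto simp: space_U01)
  also have "emeasure U01 {0..<c} = emeasure lborel {0..<c}"
    unfolding U01_def using c by (subst emeasure_restrict_space) auto
  also have "\<dots> = ennreal c" using c by simp
  finally show "(\<integral>\<^sup>+t. (if t < c then 1 else 0) \<partial>U01) = ennreal c" .
  have "(\<integral>\<^sup>+t. (if t < c then 0 else 1) \<partial>U01) = (\<integral>\<^sup>+t. indicator {c..} t \<partial>U01)"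
    by (intro nn_integral_cong) (auto simp: indicator_def)
  also have "\<dots> = emeasure U01 ({c..} \<inter> space U01)"
    by (rule nn_integral_indicator') (simp add: space_U01 U01_def sets_restrict_space_iff)
  also have "{c..} \<inter> space U01 = {c..1}" using c by (auto simp: space_U01)
  also have "emeasure U01 {c..1} = emeasure lborel {c..1}"
    unfolding U01_def using c by (subst emeasure_restrict_space) auto
  also have "\<dots> = ennreal (1 - c)" using c by simp
  finally show "(\<integral>\<^sup>+t. (if t < c then 0 else 1) \<partial>U01) = ennreal (1 - c)" .
qed

lemma step_int:
  assumes w[measurable]: "w \<in> borel_measurable U01" and wb: "\<And>s. s \<in> {0..1} \<Longrightarrow> 0 \<le> w s \<and> w s \<le> 1"
  shows "(\<integral>\<^sup>+z. (if snd z < w (fst z) then 1 else 0) \<partial>(U01 \<Otimes>\<^sub>M U01)) = (\<integral>\<^sup>+s. ennreal (w s) \<partial>U01)"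
    and "(\<integral>\<^sup>+z. (if snd z < w (fst z) then 0 else 1) \<partial>(U01 \<Otimes>\<^sub>M U01)) = (\<integral>\<^sup>+s. ennreal (1 - w s) \<partial>U01)"
proof -
  interpret U: prob_space U01 by (rule ps_U01)
  have [measurable]: "(\<lambda>z::real\<times>real. if snd z < w (fst z) then 1 else (0::ennreal)) \<in> borel_measurable (U01 \<Otimes>\<^sub>M U01)"
    by measurable
  have [measurable]: "(\<lambda>z::real\<times>real. if snd z < w (fst z) then 0 else (1::ennreal)) \<in> borel_measurable (U01 \<Otimes>\<^sub>M U01)"
    by measurable
  show "(\<integral>\<^sup>+z. (if snd z < w (fst z) then 1 else 0) \<partial>(U01 \<Otimes>\<^sub>M U01)) = (\<integral>\<^sup>+s. ennreal (w s) \<partial>U01)"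
    apply (subst U.nn_integral_fst[symmetric], simp)
    apply (rule nn_integral_cong)
    using int_lt_U01 wb by (simp add: space_U01)
  show "(\<integral>\<^sup>+z. (if snd z < w (fst z) then 0 else 1) \<partial>(U01 \<Otimes>\<^sub>M U01)) = (\<integral>\<^sup>+s. ennreal (1 - w s) \<partial>U01)"
    apply (subst U.nn_integral_fst[symmetric], simp)
    apply (rule nn_integral_cong)
    using int_lt_U01 wb by (simp add: space_U01)
qed


lemma Fc_zero: "Fc 0 p k = 1"
  by (induction k) (simp_all add: Fc_0 Fc_step)

lemma int_compl:
  assumes w[measurable]: "w \<in> borel_measurable U01" and wb: "\<And>s. s \<in> {0..1} \<Longrightarrow> 0 \<le> w s \<and> w s \<le> 1"
    and p: "(\<integral>\<^sup>+s. ennreal (w s) \<partial>U01) = ennreal p" and p0: "0 \<le> p"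
  shows "(\<integral>\<^sup>+s. ennreal (1 - w s) \<partial>U01) = ennreal (1 - p)"
proof -
  interpret U: prob_space U01 by (rule ps_U01)
  have "(\<integral>\<^sup>+s. ennreal (1 - w s) \<partial>U01) + ennreal p = (\<integral>\<^sup>+s. ennreal (1 - w s) + ennreal (w s) \<partial>U01)"
    by (subst nn_integral_add) (auto simp: p)
  also have "\<dots> = (\<integral>\<^sup>+s. 1 \<partial>U01)"
    by (intro nn_integral_cong) (use wb in \<open>auto simp: space_U01 ennreal_plus[symmetric] simp del: ennreal_plus\<close>)
  also have "\<dots> = 1" by (simp add: U.emeasure_space_1)
  finally have e: "(\<integral>\<^sup>+s. ennreal (1 - w s) \<partial>U01) + ennreal p = 1" .
  have "(\<integral>\<^sup>+s. ennreal (1 - w s) \<partial>U01) = ((\<integral>\<^sup>+s. ennreal (1 - w s) \<partial>U01) + ennreal p) - ennreal p"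
    by (simp add: ennreal_add_diff_cancel_right)
  also have "\<dots> = ennreal 1 - ennreal p" by (simp add: e)
  also have "\<dots> = ennreal (1 - p)" using p0 by (rule ennreal_minus)
  finally show ?thesis .
qed

lemma Ind:
  assumes w[measurable]: "w \<in> borel_measurable U01" and wb: "\<And>s. s \<in> {0..1} \<Longrightarrow> 0 \<le> w s \<and> w s \<le> 1"
    and p: "(\<integral>\<^sup>+s. ennreal (w s) \<partial>U01) = ennreal p" and p01: "0 \<le> p" "p \<le> 1"
  shows "finite J \<Longrightarrow> J \<subseteq> {2..m} \<Longrightarrow>
    (\<integral>\<^sup>+\<omega>. (if card {j\<in>J. snd \<omega> (1,j) < w (fst \<omega> j)} \<le> k then 1 else 0) \<partial>model m) = ennreal (Fc (card J) p k)"
proof (induction J arbitrary: k rule: finite_induct)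
  case empty
  interpret prob_space "model m" by (rule ps_model)
  show ?case by (simp add: Fc_zero emeasure_space_1)
next
  case (insert a J)
  have aJ: "a \<notin> J" "finite J" "J \<subseteq> {2..m}" "a \<in> {2..m}" using insert by auto
  have a1: "a \<in> {1..m}" "(1,a) \<in> pairs m" using aJ by (auto simp: pairs_def)
  let ?c = "\<lambda>\<omega>::(nat\<Rightarrow>real)\<times>(nat\<times>nat\<Rightarrow>real). card {j\<in>J. snd \<omega> (1::nat,j) < w (fst \<omega> j)}"
  define f1 where "f1 s t = (if t < w s then 1 else (0::ennreal))" for s t
  define f0 where "f0 s t = (if t < w s then 0 else (1::ennreal))" for s t
  define G1 where "G1 \<omega> = (if 0 < k \<and> ?c \<omega> \<le> k - 1 then 1 else (0::ennreal))" for \<omega>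
  define G0 where "G0 \<omega> = (if ?c \<omega> \<le> k then 1 else (0::ennreal))" for \<omega>
  have cm[measurable]: "(\<lambda>\<omega>. real (?c \<omega>)) \<in> borel_measurable (model m)"
    by (rule cnt_meas[OF aJ(3) w])
  have G1m: "G1 \<in> borel_measurable (model m)"
  proof -
    have "G1 = (\<lambda>\<omega>. if 0 < k \<and> real (?c \<omega>) \<le> real k - 1 then 1 else (0::ennreal))"
      by (auto simp: G1_def fun_eq_iff of_nat_diff)
    also have "\<dots> \<in> borel_measurable (model m)" by measurable
    finally show ?thesis .
  qed
  have G0m: "G0 \<in> borel_measurable (model m)"
  proof -
    have "G0 = (\<lambda>\<omega>. if real (?c \<omega>) \<le> real k then 1 else (0::ennreal))"
      by (auto simp: G0_def fun_eq_iff)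
    also have "\<dots> \<in> borel_measurable (model m)" by measurable
    finally show ?thesis .
  qed
  have f1m: "case_prod f1 \<in> borel_measurable (U01 \<Otimes>\<^sub>M U01)" unfolding f1_def by measurable
  have f0m: "case_prod f0 \<in> borel_measurable (U01 \<Otimes>\<^sub>M U01)" unfolding f0_def by measurable
  have Xa: "(\<lambda>\<omega>. fst \<omega> a) \<in> measurable (model m) U01" by (rule coordX[OF a1(1)])
  have Ua: "(\<lambda>\<omega>. snd \<omega> (1,a)) \<in> measurable (model m) U01" by (rule coordU[OF a1(2)])
  have invc1: "?c (X(a:=s), U) = ?c (X,U)" for X U s
  proof -
    have "{j\<in>J. U (1,j) < w ((X(a:=s)) j)} = {j\<in>J. U (1,j) < w (X j)}" using aJ by auto
    then show ?thesis by simp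
  qed
  have invc2: "?c (X, U((1,a):=t)) = ?c (X,U)" for X U t
  proof -
    have "{j\<in>J. (U((1,a):=t)) (1,j) < w (X j)} = {j\<in>J. U (1,j) < w (X j)}" using aJ by auto
    then show ?thesis by simp
  qed
  have split: "(if card {j\<in>insert a J. snd \<omega> (1,j) < w (fst \<omega> j)} \<le> k then 1 else 0) =
      f1 (fst \<omega> a) (snd \<omega> (1,a)) * G1 \<omega> + f0 (fst \<omega> a) (snd \<omega> (1,a)) * G0 \<omega>" for \<omega>
  proof -
    have "{j\<in>insert a J. snd \<omega> (1,j) < w (fst \<omega> j)} =
      (if snd \<omega> (1,a) < w (fst \<omega> a) then insert a {j\<in>J. snd \<omega> (1,j) < w (fst \<omega> j)} else {j\<in>J. snd \<omega> (1,j) < w (fst \<omega> j)})"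
      by auto
    then show ?thesis using aJ by (auto simp: f1_def f0_def G1_def G0_def)
  qed
  have fin: "finite {1..m}" "finite (pairs m)"
    by simp (rule finite_subset[of _ "{1..m} \<times> {1..m}"], auto simp: pairs_def)
  have G1m': "G1 \<in> borel_measurable (PiM {1..m} (\<lambda>_. U01) \<Otimes>\<^sub>M PiM (pairs m) (\<lambda>_. U01))"
    using G1m by (simp add: model_def)
  have G0m': "G0 \<in> borel_measurable (PiM {1..m} (\<lambda>_. U01) \<Otimes>\<^sub>M PiM (pairs m) (\<lambda>_. U01))"
    using G0m by (simp add: model_def)
  have L2a: "(\<integral>\<^sup>+\<omega>. f1 (fst \<omega> a) (snd \<omega> (1,a)) * G1 \<omega> \<partial>model m) =
     (\<integral>\<^sup>+z. f1 (fst z) (snd z) \<partial>(U01 \<Otimes>\<^sub>M U01)) * (\<integral>\<^sup>+\<omega>. G1 \<omega> \<partial>model m)"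
    unfolding model_def
    by (rule L2[OF ps_U01 ps_U01 fin a1 f1m G1m']) (simp_all only: G1_def invc1 invc2)
  have L2b: "(\<integral>\<^sup>+\<omega>. f0 (fst \<omega> a) (snd \<omega> (1,a)) * G0 \<omega> \<partial>model m) =
     (\<integral>\<^sup>+z. f0 (fst z) (snd z) \<partial>(U01 \<Otimes>\<^sub>M U01)) * (\<integral>\<^sup>+\<omega>. G0 \<omega> \<partial>model m)"
    unfolding model_def
    by (rule L2[OF ps_U01 ps_U01 fin a1 f0m G0m']) (simp_all only: G0_def invc1 invc2)
  have i1: "(\<integral>\<^sup>+z. f1 (fst z) (snd z) \<partial>(U01 \<Otimes>\<^sub>M U01)) = ennreal p"
    using step_int(1)[OF w wb] p by (simp add: f1_def)
  have i0: "(\<integral>\<^sup>+z. f0 (fst z) (snd z) \<partial>(U01 \<Otimes>\<^sub>M U01)) = ennreal (1 - p)"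
    using step_int(2)[OF w wb] int_compl[OF w wb p p01(1)] by (simp add: f0_def)
  have g0: "(\<integral>\<^sup>+\<omega>. G0 \<omega> \<partial>model m) = ennreal (Fc (card J) p k)"
    unfolding G0_def using insert.IH aJ by simp
  have g1: "(\<integral>\<^sup>+\<omega>. G1 \<omega> \<partial>model m) = ennreal (if k = 0 then 0 else Fc (card J) p (k-1))"
  proof (cases "k = 0")
    case True then show ?thesis by (simp add: G1_def)
  next
    case False then show ?thesis unfolding G1_def using insert.IH[of "k-1"] aJ by simp
  qed
  have "(\<integral>\<^sup>+\<omega>. (if card {j\<in>insert a J. snd \<omega> (1,j) < w (fst \<omega> j)} \<le> k then 1 else 0) \<partial>model m) =
     (\<integral>\<^sup>+\<omega>. f1 (fst \<omega> a) (snd \<omega> (1,a)) * G1 \<omega> + f0 (fst \<omega> a) (snd \<omega> (1,a)) * G0 \<omega> \<partial>model m)"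
    by (simp only: split)
  also have "\<dots> = (\<integral>\<^sup>+\<omega>. f1 (fst \<omega> a) (snd \<omega> (1,a)) * G1 \<omega> \<partial>model m) + (\<integral>\<^sup>+\<omega>. f0 (fst \<omega> a) (snd \<omega> (1,a)) * G0 \<omega> \<partial>model m)"
  proof (rule nn_integral_add)
    have pm: "(\<lambda>\<omega>. (fst \<omega> a, snd \<omega> (1::nat,a))) \<in> measurable (model m) (U01 \<Otimes>\<^sub>M U01)"
      by (rule measurable_Pair[OF Xa Ua])
    have h1[measurable]: "(\<lambda>\<omega>. f1 (fst \<omega> a) (snd \<omega> (1::nat,a))) \<in> borel_measurable (model m)"
      using measurable_compose[OF pm f1m] by simp
    have h0[measurable]: "(\<lambda>\<omega>. f0 (fst \<omega> a) (snd \<omega> (1::nat,a))) \<in> borel_measurable (model m)"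
      using measurable_compose[OF pm f0m] by simp
    note G1m[measurable] G0m[measurable]
    show "(\<lambda>\<omega>. f1 (fst \<omega> a) (snd \<omega> (1,a)) * G1 \<omega>) \<in> borel_measurable (model m)" by measurable
    show "(\<lambda>\<omega>. f0 (fst \<omega> a) (snd \<omega> (1,a)) * G0 \<omega>) \<in> borel_measurable (model m)" by measurable
  qed
  also have "\<dots> = ennreal p * ennreal (if k = 0 then 0 else Fc (card J) p (k-1)) + ennreal (1 - p) * ennreal (Fc (card J) p k)"
    unfolding L2a L2b i1 i0 g1 g0 by simp
  also have "\<dots> = ennreal (Fc (Suc (card J)) p k)"
    using Fc_bounds[OF p01] p01 by (simp add: Fc_Suc ennreal_mult[symmetric] ennreal_plus[symmetric] del: ennreal_plus)
  finally show ?case using aJ by simp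
qed


lemma upd_meas:
  assumes i: "i \<in> I" and s: "s \<in> space (M i)"
  shows "(\<lambda>X. X(i:=s)) \<in> measurable (PiM I M) (PiM I M)"
  using measurable_fun_upd[of I I i "\<lambda>X. X" "PiM I M" M "\<lambda>_. s"] i s by (simp add: insert_absorb)

lemma Pin0:
  fixes M :: "'i \<Rightarrow> 'a measure"
  assumes ps: "\<And>j. prob_space (M j)"
    and fin: "finite I" and i: "i \<in> I"
    and h[measurable]: "h \<in> borel_measurable (PiM I M)"
  shows "(\<integral>\<^sup>+X. h X \<partial>PiM I M) = (\<integral>\<^sup>+s. (\<integral>\<^sup>+X. h (X(i:=s)) \<partial>PiM I M) \<partial>M i)"
proof -
  interpret product_prob_space M
    using ps by (simp add: product_prob_space_def product_prob_space_axioms_def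
        product_sigma_finite_def prob_space_imp_sigma_finite)
  define I' where "I' = I - {i}"
  have II: "I = insert i I'" "i \<notin> I'" "finite I'" using i fin by (auto simp: I'_def)
  have "(\<integral>\<^sup>+X. h X \<partial>PiM I M) = (\<integral>\<^sup>+s. (\<integral>\<^sup>+x. h (x(i:=s)) \<partial>PiM I' M) \<partial>M i)"
    using h unfolding II(1) by (intro product_nn_integral_insert_rev) (use II in auto)
  also have "\<dots> = (\<integral>\<^sup>+s. (\<integral>\<^sup>+X. h (X(i:=s)) \<partial>PiM I M) \<partial>M i)"
  proof (rule nn_integral_cong)
    fix s assume s: "s \<in> space (M i)"
    have hm: "(\<lambda>X. h (X(i:=s))) \<in> borel_measurable (PiM I M)"
      using measurable_compose[OF upd_meas[of i I s M, OF i s] h] by simp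
    have "(\<integral>\<^sup>+X. h (X(i:=s)) \<partial>PiM I M) = (\<integral>\<^sup>+x. (\<integral>\<^sup>+t. h ((x(i:=t))(i:=s)) \<partial>M i) \<partial>PiM I' M)"
      using hm unfolding II(1) by (intro product_nn_integral_insert) (use II in auto)
    also have "\<dots> = (\<integral>\<^sup>+x. h (x(i:=s)) \<partial>PiM I' M)"
      by (simp add: prob_space.emeasure_space_1[OF ps])
    finally show "(\<integral>\<^sup>+x. h (x(i:=s)) \<partial>PiM I' M) = (\<integral>\<^sup>+X. h (X(i:=s)) \<partial>PiM I M)" by simp
  qed
  finally show ?thesis .
qed

lemma Pin:
  assumes f[measurable]: "f \<in> borel_measurable (model m)" and i: "i \<in> {1..m}"
  shows "(\<integral>\<^sup>+\<omega>. f \<omega> \<partial>model m) = (\<integral>\<^sup>+s. (\<integral>\<^sup>+\<omega>. f ((fst \<omega>)(i:=s), snd \<omega>) \<partial>model m) \<partial>U01)"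
proof -
  let ?MX = "PiM {1..m} (\<lambda>_. U01)" and ?MU = "PiM (pairs m) (\<lambda>_. U01)"
  interpret PU: prob_space ?MU by (intro prob_space_PiM ps_U01)
  interpret PX: prob_space ?MX by (intro prob_space_PiM ps_U01)
  have f'[measurable]: "f \<in> borel_measurable (?MX \<Otimes>\<^sub>M ?MU)" using f by (simp add: model_def)
  define H where "H X = (\<integral>\<^sup>+U. f (X,U) \<partial>?MU)" for X
  have Hm: "H \<in> borel_measurable ?MX" unfolding H_def by measurable
  have "(\<integral>\<^sup>+\<omega>. f \<omega> \<partial>model m) = (\<integral>\<^sup>+X. H X \<partial>?MX)"
    unfolding H_def model_def using PU.nn_integral_fst[OF f'] by simp
  also have "\<dots> = (\<integral>\<^sup>+s. (\<integral>\<^sup>+X. H (X(i:=s)) \<partial>?MX) \<partial>U01)"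
    by (rule Pin0[OF ps_U01 _ i Hm]) simp
  also have "\<dots> = (\<integral>\<^sup>+s. (\<integral>\<^sup>+\<omega>. f ((fst \<omega>)(i:=s), snd \<omega>) \<partial>model m) \<partial>U01)"
  proof (rule nn_integral_cong)
    fix s assume s: "s \<in> space U01"
    have um: "(\<lambda>X. X(i:=s)) \<in> measurable ?MX ?MX" by (rule upd_meas[of i "{1..m}" s "\<lambda>_. U01", OF i s])
    have "(\<lambda>\<omega>. ((fst \<omega>)(i:=s), snd \<omega>)) \<in> measurable (?MX \<Otimes>\<^sub>M ?MU) (?MX \<Otimes>\<^sub>M ?MU)"
      by (intro measurable_Pair measurable_compose[OF measurable_fst um]) simp
    from measurable_compose[OF this f']
    have fm: "(\<lambda>\<omega>. f ((fst \<omega>)(i:=s), snd \<omega>)) \<in> borel_measurable (?MX \<Otimes>\<^sub>M ?MU)" by simp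
    show "(\<integral>\<^sup>+X. H (X(i:=s)) \<partial>?MX) = (\<integral>\<^sup>+\<omega>. f ((fst \<omega>)(i:=s), snd \<omega>) \<partial>model m)"
      unfolding H_def model_def using PU.nn_integral_fst[OF fm] by simp
  qed
  finally show ?thesis .
qed


lemma Ind2:
  assumes w[measurable]: "w \<in> borel_measurable U01" and wb: "\<And>s. s \<in> {0..1} \<Longrightarrow> 0 \<le> w s \<and> w s \<le> 1"
    and p: "(\<integral>\<^sup>+s. ennreal (w s) \<partial>U01) = ennreal p" and p01: "0 \<le> p" "p \<le> 1"
    and c: "0 \<le> c" "c \<le> 1" and m: "2 \<le> m"
  shows "(\<integral>\<^sup>+\<omega>. (if card {j\<in>{2..m}. snd \<omega> (1,j) < (if j = 2 then c else w (fst \<omega> j))} \<le> k then 1 else 0) \<partial>model m)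
     = ennreal (c * (if k = 0 then 0 else Fc (m-2) p (k-1)) + (1-c) * Fc (m-2) p k)"
proof -
  define J where "J = {3..m}"
  define a where "a = (2::nat)"
  have aJ: "a \<notin> J" "finite J" "J \<subseteq> {2..m}" "a \<in> {2..m}" "card J = m - 2" "{2..m} = insert a J"
    using m by (auto simp: J_def a_def)
  have a1: "a \<in> {1..m}" "(1,a) \<in> pairs m" using m by (auto simp: pairs_def a_def)
  let ?c = "\<lambda>\<omega>::(nat\<Rightarrow>real)\<times>(nat\<times>nat\<Rightarrow>real). card {j\<in>J. snd \<omega> (1::nat,j) < w (fst \<omega> j)}"
  define f1 where "f1 s t = (if t < c then 1 else (0::ennreal))" for s t :: real
  define f0 where "f0 s t = (if t < c then 0 else (1::ennreal))" for s t :: real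
  define G1 where "G1 \<omega> = (if 0 < k \<and> ?c \<omega> \<le> k - 1 then 1 else (0::ennreal))" for \<omega>
  define G0 where "G0 \<omega> = (if ?c \<omega> \<le> k then 1 else (0::ennreal))" for \<omega>
  have IH: "(\<integral>\<^sup>+\<omega>. (if ?c \<omega> \<le> k' then 1 else 0) \<partial>model m) = ennreal (Fc (m-2) p k')" for k'
    using Ind[OF w wb p p01 aJ(2,3)] aJ(5) by simp
  have cm[measurable]: "(\<lambda>\<omega>. real (?c \<omega>)) \<in> borel_measurable (model m)"
    by (rule cnt_meas[OF aJ(3) w])
  have G1m: "G1 \<in> borel_measurable (model m)"
  proof -
    have "G1 = (\<lambda>\<omega>. if 0 < k \<and> real (?c \<omega>) \<le> real k - 1 then 1 else (0::ennreal))"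
      by (auto simp: G1_def fun_eq_iff of_nat_diff)
    also have "\<dots> \<in> borel_measurable (model m)" by measurable
    finally show ?thesis .
  qed
  have G0m: "G0 \<in> borel_measurable (model m)"
  proof -
    have "G0 = (\<lambda>\<omega>. if real (?c \<omega>) \<le> real k then 1 else (0::ennreal))"
      by (auto simp: G0_def fun_eq_iff)
    also have "\<dots> \<in> borel_measurable (model m)" by measurable
    finally show ?thesis .
  qed
  have cst[measurable]: "(\<lambda>_::real. c) \<in> borel_measurable U01" by simp
  have f1m: "case_prod f1 \<in> borel_measurable (U01 \<Otimes>\<^sub>M U01)" unfolding f1_def by measurable
  have f0m: "case_prod f0 \<in> borel_measurable (U01 \<Otimes>\<^sub>M U01)" unfolding f0_def by measurable
  have Xa: "(\<lambda>\<omega>. fst \<omega> a) \<in> measurable (model m) U01" by (rule coordX[OF a1(1)])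
  have Ua: "(\<lambda>\<omega>. snd \<omega> (1,a)) \<in> measurable (model m) U01" by (rule coordU[OF a1(2)])
  have invc1: "?c (X(a:=s), U) = ?c (X,U)" for X U s
  proof -
    have "{j\<in>J. U (1,j) < w ((X(a:=s)) j)} = {j\<in>J. U (1,j) < w (X j)}" using aJ by auto
    then show ?thesis by simp
  qed
  have invc2: "?c (X, U((1,a):=t)) = ?c (X,U)" for X U t
  proof -
    have "{j\<in>J. (U((1,a):=t)) (1,j) < w (X j)} = {j\<in>J. U (1,j) < w (X j)}" using aJ by auto
    then show ?thesis by simp
  qed
  have split: "(if card {j\<in>{2..m}. snd \<omega> (1,j) < (if j = 2 then c else w (fst \<omega> j))} \<le> k then 1 else 0) =
      f1 (fst \<omega> a) (snd \<omega> (1,a)) * G1 \<omega> + f0 (fst \<omega> a) (snd \<omega> (1,a)) * G0 \<omega>" for \<omega>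
  proof -
    have e1: "{j\<in>J. snd \<omega> (1,j) < (if j = 2 then c else w (fst \<omega> j))} = {j\<in>J. snd \<omega> (1,j) < w (fst \<omega> j)}"
      using aJ(1) by (auto simp: a_def)
    have "{j\<in>{2..m}. snd \<omega> (1,j) < (if j = 2 then c else w (fst \<omega> j))} =
      (if snd \<omega> (1,a) < c then insert a {j\<in>J. snd \<omega> (1,j) < w (fst \<omega> j)} else {j\<in>J. snd \<omega> (1,j) < w (fst \<omega> j)})"
      unfolding aJ(6) using e1 aJ(1) by (auto simp: a_def)
    then show ?thesis using aJ by (auto simp: f1_def f0_def G1_def G0_def)
  qed
  have fin: "finite {1..m}" "finite (pairs m)"
    by simp (rule finite_subset[of _ "{1..m} \<times> {1..m}"], auto simp: pairs_def)
  have G1m': "G1 \<in> borel_measurable (PiM {1..m} (\<lambda>_. U01) \<Otimes>\<^sub>M PiM (pairs m) (\<lambda>_. U01))"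
    using G1m by (simp add: model_def)
  have G0m': "G0 \<in> borel_measurable (PiM {1..m} (\<lambda>_. U01) \<Otimes>\<^sub>M PiM (pairs m) (\<lambda>_. U01))"
    using G0m by (simp add: model_def)
  have L2a: "(\<integral>\<^sup>+\<omega>. f1 (fst \<omega> a) (snd \<omega> (1,a)) * G1 \<omega> \<partial>model m) =
     (\<integral>\<^sup>+z. f1 (fst z) (snd z) \<partial>(U01 \<Otimes>\<^sub>M U01)) * (\<integral>\<^sup>+\<omega>. G1 \<omega> \<partial>model m)"
    unfolding model_def
    by (rule L2[OF ps_U01 ps_U01 fin a1 f1m G1m']) (simp_all only: G1_def invc1 invc2)
  have L2b: "(\<integral>\<^sup>+\<omega>. f0 (fst \<omega> a) (snd \<omega> (1,a)) * G0 \<omega> \<partial>model m) =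
     (\<integral>\<^sup>+z. f0 (fst z) (snd z) \<partial>(U01 \<Otimes>\<^sub>M U01)) * (\<integral>\<^sup>+\<omega>. G0 \<omega> \<partial>model m)"
    unfolding model_def
    by (rule L2[OF ps_U01 ps_U01 fin a1 f0m G0m']) (simp_all only: G0_def invc1 invc2)
  interpret U: prob_space U01 by (rule ps_U01)
  have i1: "(\<integral>\<^sup>+z. f1 (fst z) (snd z) \<partial>(U01 \<Otimes>\<^sub>M U01)) = ennreal c"
    using step_int(1)[OF cst, of] c by (simp add: f1_def U.emeasure_space_1)
  have i0: "(\<integral>\<^sup>+z. f0 (fst z) (snd z) \<partial>(U01 \<Otimes>\<^sub>M U01)) = ennreal (1 - c)"
    using step_int(2)[OF cst] c by (simp add: f0_def U.emeasure_space_1)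
  have g0: "(\<integral>\<^sup>+\<omega>. G0 \<omega> \<partial>model m) = ennreal (Fc (m-2) p k)"
    unfolding G0_def using IH by simp
  have g1: "(\<integral>\<^sup>+\<omega>. G1 \<omega> \<partial>model m) = ennreal (if k = 0 then 0 else Fc (m-2) p (k-1))"
  proof (cases "k = 0")
    case True then show ?thesis by (simp add: G1_def)
  next
    case False then show ?thesis unfolding G1_def using IH[of "k-1"] by simp
  qed
  have "(\<integral>\<^sup>+\<omega>. (if card {j\<in>{2..m}. snd \<omega> (1,j) < (if j = 2 then c else w (fst \<omega> j))} \<le> k then 1 else 0) \<partial>model m) =
     (\<integral>\<^sup>+\<omega>. f1 (fst \<omega> a) (snd \<omega> (1,a)) * G1 \<omega> + f0 (fst \<omega> a) (snd \<omega> (1,a)) * G0 \<omega> \<partial>model m)"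
    by (simp only: split)
  also have "\<dots> = (\<integral>\<^sup>+\<omega>. f1 (fst \<omega> a) (snd \<omega> (1,a)) * G1 \<omega> \<partial>model m) + (\<integral>\<^sup>+\<omega>. f0 (fst \<omega> a) (snd \<omega> (1,a)) * G0 \<omega> \<partial>model m)"
  proof (rule nn_integral_add)
    have pm: "(\<lambda>\<omega>. (fst \<omega> a, snd \<omega> (1::nat,a))) \<in> measurable (model m) (U01 \<Otimes>\<^sub>M U01)"
      by (rule measurable_Pair[OF Xa Ua])
    have h1[measurable]: "(\<lambda>\<omega>. f1 (fst \<omega> a) (snd \<omega> (1::nat,a))) \<in> borel_measurable (model m)"
      using measurable_compose[OF pm f1m] by simp
    have h0[measurable]: "(\<lambda>\<omega>. f0 (fst \<omega> a) (snd \<omega> (1::nat,a))) \<in> borel_measurable (model m)"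
      using measurable_compose[OF pm f0m] by simp
    note G1m[measurable] G0m[measurable]
    show "(\<lambda>\<omega>. f1 (fst \<omega> a) (snd \<omega> (1,a)) * G1 \<omega>) \<in> borel_measurable (model m)" by measurable
    show "(\<lambda>\<omega>. f0 (fst \<omega> a) (snd \<omega> (1,a)) * G0 \<omega>) \<in> borel_measurable (model m)" by measurable
  qed
  also have "\<dots> = ennreal c * ennreal (if k = 0 then 0 else Fc (m-2) p (k-1)) + ennreal (1 - c) * ennreal (Fc (m-2) p k)"
    unfolding L2a L2b i1 i0 g1 g0 by simp
  also have "\<dots> = ennreal (c * (if k = 0 then 0 else Fc (m-2) p (k-1)) + (1-c) * Fc (m-2) p k)"
    using Fc_bounds[OF p01] c by (simp add: ennreal_mult[symmetric] ennreal_plus[symmetric] del: ennreal_plus)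
  finally show ?thesis .
qed



lemma Conv:
  assumes g: "continuous_on {0..1} g" and nn: "\<And>s. s \<in> {0..1} \<Longrightarrow> 0 \<le> g s"
  shows "(\<integral>\<^sup>+s. ennreal (g s) \<partial>U01) = ennreal (integral {0..1} g)"
proof -
  have hi: "(g has_integral integral {0..1} g) {0..1}"
    using integrable_continuous_interval[OF g] by (simp add: has_integral_integral)
  have "(\<integral>\<^sup>+s. ennreal (g s) \<partial>U01) = (\<integral>\<^sup>+s. ennreal (g s) * indicator {0..1} s \<partial>lborel)"
    unfolding U01_def by (rule nn_integral_restrict_space) simp
  also have "\<dots> = ennreal (integral {0..1} g)"
    by (rule nn_integral_has_integral_lebesgue'[OF nn hi])
  finally show ?thesis .
qed

definition clamp :: "real \<Rightarrow> real" where "clamp t = max 0 (min 1 t)"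

lemma clamp_cont: "continuous_on UNIV clamp"
  unfolding clamp_def by (intro continuous_intros)

lemma clamp_range: "clamp t \<in> {0..1}" by (auto simp: clamp_def)
lemma clamp_id: "t \<in> {0..1} \<Longrightarrow> clamp t = t" by (auto simp: clamp_def)

lemma space_modelX: "\<omega> \<in> space (model m) \<Longrightarrow> j \<in> {1..m} \<Longrightarrow> fst \<omega> j \<in> {0..1}"
  by (auto simp: model_def space_pair_measure space_PiM space_U01 PiE_def Pi_def)

locale WC =
  fixes W :: "real \<Rightarrow> real \<Rightarrow> real"
  assumes cont: "continuous_on sq01 (\<lambda>(x,y). W x y)"
    and Wb: "\<And>x y. x \<in> {0..1} \<Longrightarrow> y \<in> {0..1} \<Longrightarrow> 0 \<le> W x y \<and> W x y \<le> 1"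
begin

definition Wt where "Wt a b = W (clamp a) (clamp b)"

lemma Wt_cont: "continuous_on UNIV (\<lambda>z. Wt (fst z) (snd z))"
proof -
  have c1: "continuous_on UNIV (\<lambda>z::real\<times>real. (clamp (fst z), clamp (snd z)))"
    by (intro continuous_intros continuous_on_compose2[OF clamp_cont]) auto
  have "continuous_on UNIV (\<lambda>z. (\<lambda>(x,y). W x y) (clamp (fst z), clamp (snd z)))"
    by (rule continuous_on_compose2[OF cont c1]) (auto simp: sq01_def clamp_def)
  then show ?thesis by (simp add: Wt_def)
qed

lemma Wt_eq: "a \<in> {0..1} \<Longrightarrow> b \<in> {0..1} \<Longrightarrow> Wt a b = W a b"
  by (simp add: Wt_def clamp_id)

lemma Wx_cont: "x \<in> {0..1} \<Longrightarrow> continuous_on {0..1} (W x)"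
proof -
  assume x: "x \<in> {0..1}"
  have "continuous_on {0..1} (\<lambda>s. (\<lambda>(x,y). W x y) (x, s))"
    by (rule continuous_on_compose2[OF cont]) (use x in \<open>auto intro!: continuous_intros simp: sq01_def\<close>)
  then show ?thesis by simp
qed

lemma Wu_cont: "u \<in> {0..1} \<Longrightarrow> continuous_on {0..1} (\<lambda>s. W s u)"
proof -
  assume u: "u \<in> {0..1}"
  have "continuous_on {0..1} (\<lambda>s. (\<lambda>(x,y). W x y) (s, u))"
    by (rule continuous_on_compose2[OF cont]) (use u in \<open>auto intro!: continuous_intros simp: sq01_def\<close>)
  then show ?thesis by simp
qed

lemma Wx_meas: "x \<in> {0..1} \<Longrightarrow> W x \<in> borel_measurable U01"
proof -
  assume x: "x \<in> {0..1}"
  have "Wt x \<in> borel_measurable U01"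
    using borel_measurable_continuous_Pair[OF borel_measurable_const[of x] id_U01 Wt_cont] by simp
  then show ?thesis
    by (rule measurable_cong[THEN iffD1, rotated]) (use x in \<open>simp add: space_U01 Wt_eq\<close>)
qed

lemma D_int: "x \<in> {0..1} \<Longrightarrow> (\<integral>\<^sup>+s. ennreal (W x s) \<partial>U01) = ennreal (Dfun W x)"
  unfolding Dfun_def by (rule Conv[OF Wx_cont]) (use Wb in auto)

lemma D_bounds: "x \<in> {0..1} \<Longrightarrow> 0 \<le> Dfun W x \<and> Dfun W x \<le> 1"
proof -
  assume x: "x \<in> {0..1}"
  have i: "W x integrable_on {0..1}" by (rule integrable_continuous_interval[OF Wx_cont[OF x]])
  have "0 \<le> integral {0..1} (W x)"
    by (rule integral_nonneg) (use i Wb x in auto)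
  moreover have "integral {0..1} (W x) \<le> 1"
    using Henstock_Kurzweil_Integration.integral_le[OF i integrable_const_ivl[of "1::real" "0::real" 1]] Wb x by simp
  ultimately show ?thesis by (simp add: Dfun_def)
qed


lemma Wt_comp_meas:
  assumes "a \<in> {1..m}" "b \<in> {1..m}"
  shows "(\<lambda>\<omega>. W (fst \<omega> a) (fst \<omega> b)) \<in> borel_measurable (model m)"
proof -
  have a[measurable]: "(\<lambda>\<omega>. fst \<omega> a) \<in> borel_measurable (model m)"
    using measurable_compose[OF coordX[OF assms(1)] id_U01] by simp
  have b[measurable]: "(\<lambda>\<omega>. fst \<omega> b) \<in> borel_measurable (model m)"
    using measurable_compose[OF coordX[OF assms(2)] id_U01] by simp
  have "(\<lambda>\<omega>. Wt (fst \<omega> a) (fst \<omega> b)) \<in> borel_measurable (model m)"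
    by (rule borel_measurable_continuous_Pair[OF a b Wt_cont])
  then show ?thesis
    by (rule measurable_cong[THEN iffD1, rotated]) (use assms in \<open>metis Wt_eq space_modelX\<close>)
qed

end

lemma cnt_meas2:
  assumes J: "J \<subseteq> {2..m}" and A: "\<And>j. j \<in> J \<Longrightarrow> A j \<in> borel_measurable (model m)"
  shows "(\<lambda>\<omega>. real (card {j\<in>J. snd \<omega> (1,j) < A j \<omega>})) \<in> borel_measurable (model m)"
proof -
  have fin: "finite J" using J finite_subset by blast
  have "(\<lambda>\<omega>. \<Sum>j\<in>J. if snd \<omega> (1,j) < A j \<omega> then 1 else (0::real)) \<in> borel_measurable (model m)"
  proof (rule borel_measurable_sum)
    fix j assume "j \<in> J"
    then have j: "(1,j) \<in> pairs m" and Aj[measurable]: "A j \<in> borel_measurable (model m)"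
      using J A by (auto simp: pairs_def)
    have [measurable]: "(\<lambda>\<omega>. snd \<omega> (1,j)) \<in> borel_measurable (model m)"
      using measurable_compose[OF coordU[OF j] id_U01] by simp
    show "(\<lambda>\<omega>. if snd \<omega> (1,j) < A j \<omega> then 1 else (0::real)) \<in> borel_measurable (model m)"
      by measurable
  qed
  then show ?thesis using card_sum[OF fin] by simp
qed

lemma EM:
  assumes [measurable]: "(\<lambda>\<omega>. real (c \<omega>)) \<in> borel_measurable M"
  shows "emeasure M {\<omega>\<in>space M. c \<omega> \<le> k} = (\<integral>\<^sup>+\<omega>. (if c \<omega> \<le> k then 1 else 0) \<partial>M)"
proof -
  have "{\<omega>\<in>space M. real (c \<omega>) \<le> real k} \<in> sets M" by measurable
  then have S: "{\<omega>\<in>space M. c \<omega> \<le> k} \<in> sets M" by simp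
  show ?thesis
    by (subst nn_integral_indicator[OF S, symmetric]) (auto intro!: nn_integral_cong simp: indicator_def)
qed

lemma edge_set: "{j\<in>{1..m}. edge W X U 1 j} = {j\<in>{2..m}. U (1,j) < W (X 1) (X j)}"
  by (auto simp: edge_def)

lemma nd_iff:
  assumes n: "0 < n" and d: "0 \<le> d"
  shows "real c / real n \<le> d \<longleftrightarrow> c \<le> nat \<lfloor>real n * d\<rfloor>"
proof -
  have "real c / real n \<le> d \<longleftrightarrow> real c \<le> real n * d" using n by (simp add: divide_le_eq mult.commute)
  also have "\<dots> \<longleftrightarrow> int c \<le> \<lfloor>real n * d\<rfloor>" by (simp add: le_floor_iff)
  also have "\<dots> \<longleftrightarrow> c \<le> nat \<lfloor>real n * d\<rfloor>" using n d by (simp add: le_nat_iff)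
  finally show ?thesis .
qed

lemma normdeg_iff:
  assumes n: "0 < n" and d: "0 \<le> d"
  shows "normdeg W (Suc n) X U 1 \<le> d \<longleftrightarrow> card {j\<in>{2..Suc n}. U (1,j) < W (X 1) (X j)} \<le> nat \<lfloor>real n * d\<rfloor>"
  unfolding normdeg_def edge_set using nd_iff[OF n d] by simp

context WC begin

lemma R1:
  assumes n: "0 < n" and d: "0 \<le> Dfun W y" and x: "x \<in> {0..1}"
  shows "cond_prob W n 1 x y = Fc n (Dfun W x) (nat \<lfloor>real n * Dfun W y\<rfloor>)"
proof -
  define k where "k = nat \<lfloor>real n * Dfun W y\<rfloor>"
  let ?c = "\<lambda>\<omega>::(nat\<Rightarrow>real)\<times>(nat\<times>nat\<Rightarrow>real). card {j\<in>{2..Suc n}. snd \<omega> (1::nat,j) < W x (fst \<omega> j)}"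
  have set: "{\<omega> \<in> space (model (n+1)). normdeg W (n+1) ((fst \<omega>)(1 := x)) (snd \<omega>) 1 \<le> Dfun W y}
      = {\<omega> \<in> space (model (Suc n)). ?c \<omega> \<le> k}"
  proof -
    have "normdeg W (Suc n) ((fst \<omega>)(1 := x)) (snd \<omega>) 1 \<le> Dfun W y \<longleftrightarrow> ?c \<omega> \<le> k" for \<omega>
    proof -
      have "{j\<in>{2..Suc n}. snd \<omega> (1,j) < W (((fst \<omega>)(1 := x)) 1) (((fst \<omega>)(1 := x)) j)} =
            {j\<in>{2..Suc n}. snd \<omega> (1,j) < W x (fst \<omega> j)}" by auto
      then show ?thesis unfolding normdeg_iff[OF n d] k_def by simp
    qed
    then show ?thesis by simp
  qed
  have cm: "(\<lambda>\<omega>. real (?c \<omega>)) \<in> borel_measurable (model (Suc n))"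
    by (rule cnt_meas[OF _ Wx_meas[OF x]]) simp
  have "emeasure (model (Suc n)) {\<omega> \<in> space (model (Suc n)). ?c \<omega> \<le> k} = ennreal (Fc (card {2..Suc n}) (Dfun W x) k)"
    unfolding EM[OF cm]
    by (rule Ind[OF Wx_meas[OF x] _ D_int[OF x]]) (use D_bounds[OF x] Wb x in auto)
  then have "measure (model (Suc n)) {\<omega> \<in> space (model (Suc n)). ?c \<omega> \<le> k} = Fc n (Dfun W x) k"
    using Fc_bounds[of "Dfun W x" n k] D_bounds[OF x] by (simp add: measure_def)
  then show ?thesis unfolding cond_prob_def set k_def by simp
qed


lemma Fc_D_cont:
  assumes Dc: "continuous_on {0..1} (Dfun W)"
  shows "continuous_on {0..1} (\<lambda>s. Fc N (Dfun W s) k)"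
  unfolding Fc_def by (intro continuous_intros Dc)

lemma Fc_D_bounds: "s \<in> {0..1} \<Longrightarrow> 0 \<le> Fc N (Dfun W s) k \<and> Fc N (Dfun W s) k \<le> 1"
  using Fc_bounds[of "Dfun W s" N k] D_bounds[of s] by auto

lemma R2:
  assumes n: "0 < n" and d: "0 \<le> Dfun W y" and Dc: "continuous_on {0..1} (Dfun W)"
  shows "c_n W n y = integral {0..1} (\<lambda>s. Fc n (Dfun W s) (nat \<lfloor>real n * Dfun W y\<rfloor>))"
proof -
  define k where "k = nat \<lfloor>real n * Dfun W y\<rfloor>"
  let ?c = "\<lambda>\<omega>::(nat\<Rightarrow>real)\<times>(nat\<times>nat\<Rightarrow>real). card {j\<in>{2..Suc n}. snd \<omega> (1::nat,j) < W (fst \<omega> 1) (fst \<omega> j)}"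
  define f where "f \<omega> = (if ?c \<omega> \<le> k then 1 else (0::ennreal))" for \<omega>
  have set: "{\<omega> \<in> space (model (n+1)). normdeg W (n+1) (fst \<omega>) (snd \<omega>) 1 \<le> Dfun W y}
      = {\<omega> \<in> space (model (Suc n)). ?c \<omega> \<le> k}"
    unfolding k_def using normdeg_iff[OF n d] by simp
  have cm[measurable]: "(\<lambda>\<omega>. real (?c \<omega>)) \<in> borel_measurable (model (Suc n))"
    by (rule cnt_meas2) (auto intro!: Wt_comp_meas)
  have fm: "f \<in> borel_measurable (model (Suc n))"
  proof -
    have "f = (\<lambda>\<omega>. if real (?c \<omega>) \<le> real k then 1 else (0::ennreal))" by (auto simp: f_def fun_eq_iff)
    also have "\<dots> \<in> borel_measurable (model (Suc n))" by measurable
    finally show ?thesis .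
  qed
  have "emeasure (model (Suc n)) {\<omega> \<in> space (model (Suc n)). ?c \<omega> \<le> k} = (\<integral>\<^sup>+\<omega>. f \<omega> \<partial>model (Suc n))"
    unfolding EM[OF cm] f_def ..
  also have "\<dots> = (\<integral>\<^sup>+s. (\<integral>\<^sup>+\<omega>. f ((fst \<omega>)(1:=s), snd \<omega>) \<partial>model (Suc n)) \<partial>U01)"
    by (rule Pin[OF fm]) simp
  also have "\<dots> = (\<integral>\<^sup>+s. ennreal (Fc n (Dfun W s) k) \<partial>U01)"
  proof (rule nn_integral_cong)
    fix s assume "s \<in> space U01"
    then have s: "s \<in> {0..1}" by (simp add: space_U01)
    have "f ((fst \<omega>)(1:=s), snd \<omega>) = (if card {j\<in>{2..Suc n}. snd \<omega> (1,j) < W s (fst \<omega> j)} \<le> k then 1 else 0)" for \<omega>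
    proof -
      have "{j\<in>{2..Suc n}. snd \<omega> (1,j) < W (((fst \<omega>)(1 := s)) 1) (((fst \<omega>)(1 := s)) j)} =
            {j\<in>{2..Suc n}. snd \<omega> (1,j) < W s (fst \<omega> j)}" by auto
      then show ?thesis by (simp add: f_def)
    qed
    moreover have "(\<integral>\<^sup>+\<omega>. (if card {j\<in>{2..Suc n}. snd \<omega> (1,j) < W s (fst \<omega> j)} \<le> k then 1 else 0) \<partial>model (Suc n))
        = ennreal (Fc (card {2..Suc n}) (Dfun W s) k)"
      by (rule Ind[OF Wx_meas[OF s] _ D_int[OF s]]) (use D_bounds[OF s] Wb s in auto)
    ultimately show "(\<integral>\<^sup>+\<omega>. f ((fst \<omega>)(1:=s), snd \<omega>) \<partial>model (Suc n)) = ennreal (Fc n (Dfun W s) k)"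
      by simp
  qed
  also have "\<dots> = ennreal (integral {0..1} (\<lambda>s. Fc n (Dfun W s) k))"
    by (rule Conv[OF Fc_D_cont[OF Dc]]) (use Fc_D_bounds in auto)
  finally have e: "emeasure (model (Suc n)) {\<omega> \<in> space (model (Suc n)). ?c \<omega> \<le> k} = ennreal (integral {0..1} (\<lambda>s. Fc n (Dfun W s) k))" .
  have "0 \<le> integral {0..1} (\<lambda>s. Fc n (Dfun W s) k)"
    by (rule integral_nonneg[OF integrable_continuous_interval[OF Fc_D_cont[OF Dc]]]) (use Fc_D_bounds in auto)
  with e show ?thesis unfolding c_n_def set k_def by (simp add: measure_def)
qed

definition Q2 where "Q2 N p c k = c * (if k = 0 then 0 else Fc N p (k-1)) + (1-c) * Fc N p k"

lemma R3:
  assumes n: "2 \<le> n" and d: "0 \<le> Dfun W y" and Dc: "continuous_on {0..1} (Dfun W)" and u: "u \<in> {0..1}"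
  shows "cond_prob W n 2 u y = integral {0..1} (\<lambda>s. Q2 (n-1) (Dfun W s) (W s u) (nat \<lfloor>real n * Dfun W y\<rfloor>))"
proof -
  have n0: "0 < n" using n by simp
  define k where "k = nat \<lfloor>real n * Dfun W y\<rfloor>"
  let ?c = "\<lambda>\<omega>::(nat\<Rightarrow>real)\<times>(nat\<times>nat\<Rightarrow>real). card {j\<in>{2..Suc n}. snd \<omega> (1::nat,j) < W (((fst \<omega>)(2:=u)) 1) (((fst \<omega>)(2:=u)) j)}"
  define f where "f \<omega> = (if ?c \<omega> \<le> k then 1 else (0::ennreal))" for \<omega>
  have set: "{\<omega> \<in> space (model (n+1)). normdeg W (n+1) ((fst \<omega>)(2:=u)) (snd \<omega>) 1 \<le> Dfun W y}
      = {\<omega> \<in> space (model (Suc n)). ?c \<omega> \<le> k}"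
    unfolding k_def using normdeg_iff[OF n0 d] by simp
  have cm[measurable]: "(\<lambda>\<omega>. real (?c \<omega>)) \<in> borel_measurable (model (Suc n))"
  proof (rule cnt_meas2)
    fix j assume j: "j \<in> {2..Suc n}"
    show "(\<lambda>\<omega>. W (((fst \<omega>)(2:=u)) 1) (((fst \<omega>)(2:=u)) j)) \<in> borel_measurable (model (Suc n))"
    proof (cases "j = 2")
      case True
      have m1: "(\<lambda>\<omega>. fst \<omega> 1) \<in> borel_measurable (model (Suc n))"
        using measurable_compose[OF coordX[of 1 "Suc n"] id_U01] by simp
      have "(\<lambda>\<omega>. Wt (fst \<omega> 1) u) \<in> borel_measurable (model (Suc n))"
        by (rule borel_measurable_continuous_Pair[OF m1 borel_measurable_const Wt_cont])
      then have "(\<lambda>\<omega>. W (fst \<omega> 1) u) \<in> borel_measurable (model (Suc n))"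
        by (rule measurable_cong[THEN iffD1, rotated]) (use u in \<open>auto intro!: Wt_eq space_modelX\<close>)
      then show ?thesis using True by simp
    next
      case False
      then show ?thesis using Wt_comp_meas[of 1 "Suc n" j] j by simp
    qed
  qed simp
  have fm: "f \<in> borel_measurable (model (Suc n))"
  proof -
    have "f = (\<lambda>\<omega>. if real (?c \<omega>) \<le> real k then 1 else (0::ennreal))" by (auto simp: f_def fun_eq_iff)
    also have "\<dots> \<in> borel_measurable (model (Suc n))" by measurable
    finally show ?thesis .
  qed
  have Qc: "continuous_on {0..1} (\<lambda>s. Q2 (n-1) (Dfun W s) (W s u) k)"
    unfolding Q2_def by (cases "k = 0") (simp_all add: Fc_def, (intro continuous_intros Dc Wu_cont[OF u])+)
  have Qb: "s \<in> {0..1} \<Longrightarrow> 0 \<le> Q2 (n-1) (Dfun W s) (W s u) k" for s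
    unfolding Q2_def using Fc_D_bounds[of s] Wb[OF _ u, of s] by (auto intro!: add_nonneg_nonneg mult_nonneg_nonneg)
  have "emeasure (model (Suc n)) {\<omega> \<in> space (model (Suc n)). ?c \<omega> \<le> k} = (\<integral>\<^sup>+\<omega>. f \<omega> \<partial>model (Suc n))"
    unfolding EM[OF cm] f_def ..
  also have "\<dots> = (\<integral>\<^sup>+s. (\<integral>\<^sup>+\<omega>. f ((fst \<omega>)(1:=s), snd \<omega>) \<partial>model (Suc n)) \<partial>U01)"
    by (rule Pin[OF fm]) simp
  also have "\<dots> = (\<integral>\<^sup>+s. ennreal (Q2 (n-1) (Dfun W s) (W s u) k) \<partial>U01)"
  proof (rule nn_integral_cong)
    fix s assume "s \<in> space U01"
    then have s: "s \<in> {0..1}" by (simp add: space_U01)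
    have "f ((fst \<omega>)(1:=s), snd \<omega>) = (if card {j\<in>{2..Suc n}. snd \<omega> (1,j) < (if j = 2 then W s u else W s (fst \<omega> j))} \<le> k then 1 else 0)" for \<omega>
    proof -
      have "{j\<in>{2..Suc n}. snd \<omega> (1,j) < W ((((fst \<omega>)(1 := s))(2:=u)) 1) ((((fst \<omega>)(1 := s))(2:=u)) j)} =
            {j\<in>{2..Suc n}. snd \<omega> (1,j) < (if j = 2 then W s u else W s (fst \<omega> j))}" by auto
      then show ?thesis by (simp add: f_def)
    qed
    moreover have "(\<integral>\<^sup>+\<omega>. (if card {j\<in>{2..Suc n}. snd \<omega> (1,j) < (if j = 2 then W s u else W s (fst \<omega> j))} \<le> k then 1 else 0) \<partial>model (Suc n))
        = ennreal (Q2 (Suc n - 2) (Dfun W s) (W s u) k)"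
      unfolding Q2_def
      by (rule Ind2[OF Wx_meas[OF s] _ D_int[OF s]]) (use D_bounds[OF s] Wb s u n in auto)
    ultimately show "(\<integral>\<^sup>+\<omega>. f ((fst \<omega>)(1:=s), snd \<omega>) \<partial>model (Suc n)) = ennreal (Q2 (n-1) (Dfun W s) (W s u) k)"
      using n by (simp add: numeral_2_eq_2)
  qed
  also have "\<dots> = ennreal (integral {0..1} (\<lambda>s. Q2 (n-1) (Dfun W s) (W s u) k))"
    by (rule Conv[OF Qc Qb])
  finally have e: "emeasure (model (Suc n)) {\<omega> \<in> space (model (Suc n)). ?c \<omega> \<le> k} = ennreal (integral {0..1} (\<lambda>s. Q2 (n-1) (Dfun W s) (W s u) k))" .
  have "0 \<le> integral {0..1} (\<lambda>s. Q2 (n-1) (Dfun W s) (W s u) k)"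
    by (rule integral_nonneg[OF integrable_continuous_interval[OF Qc]]) (use Qb in auto)
  with e show ?thesis unfolding cond_prob_def set k_def by (simp add: measure_def)
qed

end



lemma sq01_props: "compact sq01" "convex sq01" "sq01 \<noteq> {}"
  unfolding sq01_def by (auto intro!: compact_Times convex_Times)

lemma bound_on_compact:
  fixes f :: "real\<times>real \<Rightarrow> 'b::real_normed_vector"
  assumes "continuous_on sq01 f"
  shows "\<exists>B\<ge>0. \<forall>z\<in>sq01. norm (f z) \<le> B"
proof -
  have "compact (f ` sq01)" by (rule compact_continuous_image[OF assms sq01_props(1)])
  then have "bounded (f ` sq01)" by (rule compact_imp_bounded)
  then obtain B where "\<forall>z\<in>sq01. norm (f z) \<le> B" by (auto simp: bounded_iff)
  then show ?thesis by (intro exI[of _ "max B 0"]) auto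
qed

lemma reg_facts:
  assumes G: "graphon W" and R: "regular_graphon W"
  shows "\<exists>E M1 M2 c. c > 0 \<and> M1 \<ge> 0 \<and> M2 \<ge> 0 \<and> continuous_on sq01 (\<lambda>(x,y). W x y) \<and>
   (\<forall>x\<in>{0..1}. (Dfun W has_real_derivative E x) (at x within {0..1})) \<and>
   (\<forall>x\<in>{0..1}. c \<le> E x) \<and>
   (\<forall>x\<in>{0..1}. \<forall>x'\<in>{0..1}. \<bar>E x - E x'\<bar> \<le> M2 * \<bar>x - x'\<bar>) \<and>
   (\<forall>x\<in>{0..1}. \<forall>x'\<in>{0..1}. \<forall>u\<in>{0..1}. \<bar>W x u - W x' u\<bar> \<le> M1 * \<bar>x - x'\<bar>)"
proof -
  let ?Wp = "\<lambda>(x,y). W x y"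
  from R obtain f1 f2 f3 where
    d1: "\<And>z. z \<in> sq01 \<Longrightarrow> (?Wp has_derivative blinfun_apply (f1 z)) (at z within sq01)" and
    d2: "\<And>z. z \<in> sq01 \<Longrightarrow> (f1 has_derivative blinfun_apply (f2 z)) (at z within sq01)" and
    d3: "\<And>z. z \<in> sq01 \<Longrightarrow> (f2 has_derivative blinfun_apply (f3 z)) (at z within sq01)"
    unfolding regular_graphon_def C3_on_def by blast
  have cW: "continuous_on sq01 ?Wp" by (rule has_derivative_continuous_on[OF d1])
  have c1: "continuous_on sq01 f1" by (rule has_derivative_continuous_on[OF d2])
  have c2: "continuous_on sq01 f2" by (rule has_derivative_continuous_on[OF d3])
  obtain M1 where M1: "M1 \<ge> 0" "\<And>z. z \<in> sq01 \<Longrightarrow> norm (f1 z) \<le> M1"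
    using bound_on_compact[OF c1] by blast
  obtain M2 where M2: "M2 \<ge> 0" "\<And>z. z \<in> sq01 \<Longrightarrow> norm (f2 z) \<le> M2"
    using bound_on_compact[OF c2] by blast
  have Wlip: "\<bar>W x u - W x' u\<bar> \<le> M1 * \<bar>x - x'\<bar>" if "x \<in> {0..1}" "x' \<in> {0..1}" "u \<in> {0..1}" for x x' u
  proof -
    have "norm (?Wp (x,u) - ?Wp (x',u)) \<le> M1 * norm ((x,u) - (x',u))"
      by (rule differentiable_bound[OF sq01_props(2) d1])
         (use M1 that in \<open>auto simp: norm_blinfun.rep_eq[symmetric] sq01_def\<close>)
    then show ?thesis by simp
  qed
  have f1lip: "norm (f1 z - f1 z') \<le> M2 * norm (z - z')" if "z \<in> sq01" "z' \<in> sq01" for z z'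
    by (rule differentiable_bound[OF sq01_props(2) d2])
       (use M2 that in \<open>auto simp: norm_blinfun.rep_eq[symmetric]\<close>)
  define W1 where "W1 x t = blinfun_apply (f1 (x,t)) (1,0)" for x t
  have W1lip: "\<bar>W1 x t - W1 x' t\<bar> \<le> M2 * \<bar>x - x'\<bar>" if "x \<in> {0..1}" "x' \<in> {0..1}" "t \<in> {0..1}" for x x' t
  proof -
    have "\<bar>W1 x t - W1 x' t\<bar> = norm (blinfun_apply (f1 (x,t) - f1 (x',t)) (1,0))"
      by (simp add: W1_def blinfun.diff_left)
    also have "\<dots> \<le> norm (f1 (x,t) - f1 (x',t)) * norm ((1::real),(0::real))" by (rule norm_blinfun)
    also have "\<dots> = norm (f1 (x,t) - f1 (x',t))" by simp
    also have "\<dots> \<le> M2 * norm ((x,t) - (x',t))" by (rule f1lip) (use that in \<open>auto simp: sq01_def\<close>)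
    also have "\<dots> = M2 * \<bar>x - x'\<bar>" by simp
    finally show ?thesis .
  qed
  have W1c: "continuous_on ({0..1} \<times> {0..1}) (\<lambda>(x,t). W1 x t)"
  proof -
    have "continuous_on sq01 (\<lambda>z. blinfun_apply (f1 z) (1,0))"
      by (intro continuous_intros c1)
    then show ?thesis by (simp add: W1_def sq01_def case_prod_beta)
  qed
  have pd: "((\<lambda>s. W s t) has_field_derivative W1 s t) (at s within {0..1})"
    if s: "s \<in> {0..1}" and t: "t \<in> {0..1}" for s t
  proof -
    have p: "((\<lambda>s. (s,t)) has_derivative (\<lambda>h. (h,0))) (at s within {0..1})"
      by (auto intro!: derivative_eq_intros)
    have "((\<lambda>s. ?Wp (s,t)) has_derivative (\<lambda>h. blinfun_apply (f1 (s,t)) (h,0))) (at s within {0..1})"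
      by (rule has_derivative_in_compose2[OF d1 _ s p]) (use t in \<open>auto simp: sq01_def\<close>)
    moreover have "(\<lambda>h. blinfun_apply (f1 (s,t)) (h,0)) = (*) (W1 s t)"
    proof
      fix h :: real
      have "blinfun_apply (f1 (s,t)) (h,0) = blinfun_apply (f1 (s,t)) (h *\<^sub>R (1,0))" by simp
      also have "\<dots> = h * W1 s t" by (simp only: blinfun.scaleR_right W1_def) simp
      finally show "blinfun_apply (f1 (s,t)) (h,0) = W1 s t * h" by simp
    qed
    ultimately show ?thesis by (simp add: has_field_derivative_def)
  qed
  define E where "E x = integral {0..1} (W1 x)" for x
  have Wxc: "continuous_on {0..1} (W x)" if "x \<in> {0..1}" for x
  proof -
    have "continuous_on {0..1} (\<lambda>s. ?Wp (x, s))"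
      by (rule continuous_on_compose2[OF cW]) (use that in \<open>auto intro!: continuous_intros simp: sq01_def\<close>)
    then show ?thesis by simp
  qed
  have W1xc: "continuous_on {0..1} (W1 x)" if "x \<in> {0..1}" for x
  proof -
    have "continuous_on {0..1} (\<lambda>s. (\<lambda>(x,t). W1 x t) (x, s))"
      by (rule continuous_on_compose2[OF W1c]) (use that in \<open>auto intro!: continuous_intros\<close>)
    then show ?thesis by simp
  qed
  have DE: "(Dfun W has_real_derivative E x) (at x within {0..1})" if x: "x \<in> {0..1}" for x
  proof -
    have "((\<lambda>x. integral (cbox 0 1) (W x)) has_field_derivative integral (cbox 0 1) (W1 x)) (at x within {0..1})"
      by (rule leibniz_rule_field_derivative)
         (use pd x W1c Wxc in \<open>auto intro: integrable_continuous_interval simp: cbox_interval\<close>)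
    then show ?thesis by (simp add: cbox_interval E_def Dfun_def[abs_def])
  qed
  have Elip: "\<bar>E x - E x'\<bar> \<le> M2 * \<bar>x - x'\<bar>" if "x \<in> {0..1}" "x' \<in> {0..1}" for x x'
  proof -
    have i1: "W1 x integrable_on {0..1}" "W1 x' integrable_on {0..1}"
      using that by (auto intro!: integrable_continuous_interval W1xc)
    have "E x - E x' = integral {0..1} (\<lambda>t. W1 x t - W1 x' t)"
      unfolding E_def by (rule integral_diff[symmetric]) (use i1 in auto)
    also have "norm \<dots> \<le> integral {0..1} (\<lambda>t::real. M2 * \<bar>x - x'\<bar>)"
      by (rule Henstock_Kurzweil_Integration.integral_norm_bound_integral) (use i1 that W1lip in \<open>auto intro!: integrable_diff\<close>)
    also have "\<dots> = M2 * \<bar>x - x'\<bar>" by simp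
    finally show ?thesis by simp
  qed
  have Ec: "continuous_on {0..1} E"
  proof (rule lipschitz_on_continuous_on)
    show "M2-lipschitz_on {0..1} E"
      by (rule lipschitz_onI) (use Elip M2 in \<open>auto simp: dist_real_def\<close>)
  qed
  have Epos: "E x > 0" if x: "x \<in> {0..1}" for x
  proof -
    obtain d' where d': "(Dfun W has_real_derivative d') (at x within {0..1})" "d' > 0"
      using R x unfolding regular_graphon_def by blast
    have "E x = d'"
      by (rule vector_derivative_unique_within_closed_interval[of 0 1 x "Dfun W"])
         (use x DE[OF x] d' in \<open>auto simp: cbox_interval has_real_derivative_iff_has_vector_derivative\<close>)
    then show ?thesis using d' by simp
  qed
  obtain x0 where x0: "x0 \<in> {0..1}" "\<forall>x\<in>{0..1}. E x0 \<le> E x"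
    using continuous_attains_inf[OF compact_Icc _ Ec] by auto
  show ?thesis
    apply (rule exI[of _ E], rule exI[of _ M1], rule exI[of _ M2], rule exI[of _ "E x0"])
    using Epos[OF x0(1)] x0(2) M1(1) M2(1) cW DE Elip Wlip by auto
qed



lemma FTC_sub:
  fixes \<Phi> \<rho> :: "real \<Rightarrow> real"
  assumes d\<Phi>: "\<And>s. s \<in> {0..1} \<Longrightarrow> (\<Phi> has_real_derivative (- \<rho> s)) (at s within {0..1})"
    and pq: "0 \<le> p" "p \<le> q" "q \<le> 1"
  shows "(\<rho> has_integral (\<Phi> p - \<Phi> q)) {p..q}"
proof -
  have "((\<lambda>s. - \<rho> s) has_integral (\<Phi> q - \<Phi> p)) {p..q}"
  proof (rule fundamental_theorem_of_calculus[OF pq(2)])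
    fix s assume s: "s \<in> {p..q}"
    have "(\<Phi> has_real_derivative (- \<rho> s)) (at s within {p..q})"
      by (rule DERIV_subset[OF d\<Phi>]) (use s pq in auto)
    then show "(\<Phi> has_vector_derivative (- \<rho> s)) (at s within {p..q})"
      by (simp add: has_real_derivative_iff_has_vector_derivative)
  qed
  from has_integral_neg[OF this] show ?thesis by simp
qed

lemma AL:
  fixes \<Phi> \<rho> g :: "real \<Rightarrow> real"
  assumes d\<Phi>: "\<And>s. s \<in> {0..1} \<Longrightarrow> (\<Phi> has_real_derivative (- \<rho> s)) (at s within {0..1})"
    and \<rho>c: "continuous_on {0..1} \<rho>" and \<rho>nn: "\<And>s. s\<in>{0..1} \<Longrightarrow> 0 \<le> \<rho> s"
    and gc: "continuous_on {0..1} g" and gb: "\<And>s. s\<in>{0..1} \<Longrightarrow> \<bar>g s\<bar> \<le> G"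
    and gl: "\<And>s. s\<in>{0..1} \<Longrightarrow> \<bar>g s - g y\<bar> \<le> L * \<bar>s - y\<bar>"
    and ab: "0 \<le> a" "a \<le> y" "y \<le> b" "b \<le> 1" and \<delta>: "y - a \<le> \<delta>" "b - y \<le> \<delta>"
    and \<Phi>b: "\<And>s. s \<in> {0..1} \<Longrightarrow> 0 \<le> \<Phi> s \<and> \<Phi> s \<le> 1"
    and L: "L \<ge> 0"
  shows "\<bar>integral {0..1} (\<lambda>s. g s * \<rho> s) - g y\<bar> \<le> L * \<delta> + 3 * G * ((1 - \<Phi> a) + \<Phi> b)"
proof -
  have y01: "y \<in> {0..1}" using ab by auto
  have G0: "0 \<le> G" using gb[OF y01] by simp
  have I: "integral {p..q} \<rho> = \<Phi> p - \<Phi> q" if "0 \<le> p" "p \<le> q" "q \<le> 1" for p q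
    using FTC_sub[OF d\<Phi> that] by (rule integral_unique)
  have mono: "\<Phi> q \<le> \<Phi> p" if "0 \<le> p" "p \<le> q" "q \<le> 1" for p q
  proof -
    have "0 \<le> integral {p..q} \<rho>"
      by (rule integral_nonneg) (use that \<rho>nn FTC_sub[OF d\<Phi> that] in auto)
    then show ?thesis using I[OF that] by simp
  qed
  define h where "h s = (g s - g y) * \<rho> s" for s
  have hc: "continuous_on {0..1} h" unfolding h_def by (intro continuous_intros gc \<rho>c)
  have hi: "h integrable_on {p..q}" if "0 \<le> p" "q \<le> 1" for p q
    by (rule integrable_continuous_interval, rule continuous_on_subset[OF hc]) (use that in auto)
  have \<rho>i: "\<rho> integrable_on {p..q}" if "0 \<le> p" "q \<le> 1" for p q
    by (rule integrable_continuous_interval, rule continuous_on_subset[OF \<rho>c]) (use that in auto)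
  have bnd: "\<bar>integral {p..q} h\<bar> \<le> K * (\<Phi> p - \<Phi> q)"
    if pq: "0 \<le> p" "p \<le> q" "q \<le> 1" and K: "\<And>s. s \<in> {p..q} \<Longrightarrow> \<bar>g s - g y\<bar> \<le> K" for p q K
  proof -
    have "norm (integral {p..q} h) \<le> integral {p..q} (\<lambda>s. K * \<rho> s)"
    proof (rule Henstock_Kurzweil_Integration.integral_norm_bound_integral)
      show "h integrable_on {p..q}" by (rule hi) (use pq in auto)
      show "(\<lambda>s. K * \<rho> s) integrable_on {p..q}" using integrable_cmul[OF \<rho>i[of p q], of K] pq by simp
      fix s assume s: "s \<in> {p..q}"
      have "\<bar>h s\<bar> = \<bar>g s - g y\<bar> * \<rho> s" using \<rho>nn[of s] s pq by (simp add: h_def abs_mult)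
      also have "\<dots> \<le> K * \<rho> s" by (rule mult_right_mono[OF K[OF s]]) (use \<rho>nn[of s] s pq in auto)
      finally show "norm (h s) \<le> K * \<rho> s" by simp
    qed
    also have "\<dots> = K * (\<Phi> p - \<Phi> q)" by (simp add: I[OF pq])
    finally show ?thesis by simp
  qed
  have c1: "integral {0..a} h + integral {a..1} h = integral {0..1} h"
    by (rule Henstock_Kurzweil_Integration.integral_combine) (use ab hi in auto)
  have c2: "integral {a..b} h + integral {b..1} h = integral {a..1} h"
    by (rule Henstock_Kurzweil_Integration.integral_combine) (use ab hi in auto)
  have gg: "\<bar>g s - g y\<bar> \<le> 2*G" if "s \<in> {0..1}" for s
    using gb[OF that] gb[OF y01] abs_triangle_ineq4[of "g s" "g y"] by linarith
  have b1: "\<bar>integral {0..a} h\<bar> \<le> (2*G) * (\<Phi> 0 - \<Phi> a)"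
    by (rule bnd) (use ab gg in auto)
  have b2: "\<bar>integral {a..b} h\<bar> \<le> (L*\<delta>) * (\<Phi> a - \<Phi> b)"
  proof (rule bnd)
    fix s assume s: "s \<in> {a..b}"
    have "\<bar>g s - g y\<bar> \<le> L * \<bar>s - y\<bar>" by (rule gl) (use s ab in auto)
    also have "\<dots> \<le> L * \<delta>" by (rule mult_left_mono) (use s \<delta> L in auto)
    finally show "\<bar>g s - g y\<bar> \<le> L * \<delta>" .
  qed (use ab in auto)
  have b3: "\<bar>integral {b..1} h\<bar> \<le> (2*G) * (\<Phi> b - \<Phi> 1)"
    by (rule bnd) (use ab gg in auto)
  have split: "integral {0..1} (\<lambda>s. g s * \<rho> s) = integral {0..1} h + g y * (\<Phi> 0 - \<Phi> 1)"
  proof -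
    have "integral {0..1} (\<lambda>s. g s * \<rho> s) = integral {0..1} (\<lambda>s. h s + g y * \<rho> s)"
      by (simp add: h_def algebra_simps)
    also have "\<dots> = integral {0..1} h + integral {0..1} (\<lambda>s. g y * \<rho> s)"
      by (rule integral_add) (use hi integrable_cmul[OF \<rho>i[of 0 1], of "g y"] in auto)
    also have "integral {0..1} (\<lambda>s. g y * \<rho> s) = g y * (\<Phi> 0 - \<Phi> 1)"
      using I[of 0 1] by simp
    finally show ?thesis .
  qed
  have m1: "\<Phi> a \<le> \<Phi> 0" "\<Phi> 1 \<le> \<Phi> b" "\<Phi> b \<le> \<Phi> a" using mono ab by auto
  have \<Phi>ab: "0 \<le> \<Phi> a" "\<Phi> a \<le> 1" "0 \<le> \<Phi> b" "\<Phi> b \<le> 1" "\<Phi> 0 \<le> 1" "0 \<le> \<Phi> 1"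
    using \<Phi>b[of a] \<Phi>b[of b] \<Phi>b[of 0] \<Phi>b[of 1] ab by auto
  have b4: "\<bar>g y * (\<Phi> 0 - \<Phi> 1) - g y\<bar> \<le> G * ((1 - \<Phi> a) + \<Phi> b)"
  proof -
    have "\<bar>g y * (\<Phi> 0 - \<Phi> 1) - g y\<bar> = \<bar>g y\<bar> * \<bar>1 - \<Phi> 0 + \<Phi> 1\<bar>" by (simp add: abs_mult[symmetric] algebra_simps)
    also have "\<dots> \<le> G * \<bar>1 - \<Phi> 0 + \<Phi> 1\<bar>" by (rule mult_right_mono[OF gb[OF y01]]) simp
    also have "\<bar>1 - \<Phi> 0 + \<Phi> 1\<bar> \<le> (1 - \<Phi> a) + \<Phi> b" using m1 \<Phi>ab by auto
    then have "G * \<bar>1 - \<Phi> 0 + \<Phi> 1\<bar> \<le> G * ((1 - \<Phi> a) + \<Phi> b)" by (rule mult_left_mono) (rule G0)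
    finally show ?thesis .
  qed
  have "L * \<delta> * (\<Phi> a - \<Phi> b) \<le> L * \<delta>"
  proof -
    have "0 \<le> L * \<delta>" using L \<delta> ab by auto
    moreover have "\<Phi> a - \<Phi> b \<le> 1" using \<Phi>ab by auto
    ultimately show ?thesis using mult_left_mono[of "\<Phi> a - \<Phi> b" 1 "L*\<delta>"] by simp
  qed
  moreover have "2 * G * (\<Phi> 0 - \<Phi> a) \<le> 2 * G * (1 - \<Phi> a)" using G0 \<Phi>ab by (intro mult_left_mono) auto
  moreover have "2 * G * (\<Phi> b - \<Phi> 1) \<le> 2 * G * \<Phi> b" using G0 \<Phi>ab by (intro mult_left_mono) auto
  ultimately show ?thesis
    using b1 b2 b3 b4 c1 c2 split by (simp add: algebra_simps)
qed



lemma exp_bound: "(t::real) > 0 \<Longrightarrow> exp (-t) \<le> 1 / t"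
proof -
  assume t: "t > 0"
  have "1 + t \<le> exp t" using exp_ge_add_one_self[of t] by simp
  then have "t \<le> exp t" by linarith
  then show ?thesis using t by (simp add: exp_minus divide_simps)
qed

locale Setting = WC W for W +
  fixes E :: "real \<Rightarrow> real" and M1 M2 c e0 :: real
  assumes cpos: "c > 0" and M1: "M1 \<ge> 0" and M2: "M2 \<ge> 0"
  and DE: "\<And>x. x\<in>{0..1} \<Longrightarrow> (Dfun W has_real_derivative E x) (at x within {0..1})"
  and Ec: "\<And>x. x\<in>{0..1} \<Longrightarrow> c \<le> E x"
  and Elip: "\<And>x x'. x\<in>{0..1} \<Longrightarrow> x'\<in>{0..1} \<Longrightarrow> \<bar>E x - E x'\<bar> \<le> M2 * \<bar>x - x'\<bar>"
  and Wlip: "\<And>x x' u. x\<in>{0..1} \<Longrightarrow> x'\<in>{0..1} \<Longrightarrow> u\<in>{0..1} \<Longrightarrow> \<bar>W x u - W x' u\<bar> \<le> M1 * \<bar>x - x'\<bar>"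
  and e0: "0 < e0" "\<And>x y. x\<in>{0..1} \<Longrightarrow> y\<in>{0..1} \<Longrightarrow> W x y \<le> 1 - e0"
     "\<And>x. x\<in>{0..1} \<Longrightarrow> e0 \<le> Dfun W x"
begin

abbreviation "D \<equiv> Dfun W"

lemma QF: "Q2 N p q k - Fc (Suc N) p k = (p - q) * (real (N choose k) * p^k * (1-p)^(N-k))"
proof (cases k)
  case 0 then show ?thesis by (simp add: Q2_def Fc_Suc Fc_0 algebra_simps)
next
  case (Suc k')
  have B: "Fc N p (Suc k') = Fc N p k' + real (N choose Suc k') * p^Suc k' * (1-p)^(N - Suc k')"
    by (rule Fc_step)
  show ?thesis unfolding Q2_def Fc_Suc Suc by (simp add: B algebra_simps)
qed


lemma Dc: "continuous_on {0..1} D"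
  by (rule has_derivative_continuous_on[of _ _ "\<lambda>x h. E x * h"])
     (use DE in \<open>auto simp: has_field_derivative_def\<close>)

lemma D_lip: assumes "s \<in> {0..1}" "s' \<in> {0..1}" shows "\<bar>D s - D s'\<bar> \<le> M1 * \<bar>s - s'\<bar>"
proof -
  have i1: "W s integrable_on {0..1}" "W s' integrable_on {0..1}"
    using assms by (auto intro!: integrable_continuous_interval Wx_cont)
  have "D s - D s' = integral {0..1} (\<lambda>t. W s t - W s' t)"
    unfolding Dfun_def by (rule integral_diff[symmetric]) (use i1 in auto)
  also have "norm \<dots> \<le> integral {0..1} (\<lambda>t::real. M1 * \<bar>s - s'\<bar>)"
    by (rule Henstock_Kurzweil_Integration.integral_norm_bound_integral) (use i1 assms Wlip in \<open>auto intro!: integrable_diff\<close>)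
  also have "\<dots> = M1 * \<bar>s - s'\<bar>" by simp
  finally show ?thesis by simp
qed

lemma D_le: assumes "x \<in> {0..1}" shows "D x \<le> 1 - e0"
proof -
  have i: "W x integrable_on {0..1}" by (rule integrable_continuous_interval[OF Wx_cont[OF assms]])
  show ?thesis
    using Henstock_Kurzweil_Integration.integral_le[OF i integrable_const_ivl[of "1 - e0" "0::real" 1]] e0(2)[OF assms]
    by (simp add: Dfun_def)
qed

lemma Dmono: assumes ab: "0 \<le> a" "a \<le> b" "b \<le> 1" shows "c * (b - a) \<le> D b - D a"
proof (cases "a = b")
  case True then show ?thesis by simp
next
  case False
  then have ab': "a < b" using ab by simp
  have "\<exists>x\<in>{a<..<b}. (D b - c*b) - (D a - c*a) = (\<lambda>h. (E x - c) * h) (b - a)"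
  proof (rule mvt_simple[OF ab'])
    fix x assume x: "a \<le> x" "x \<le> b"
    have "(D has_real_derivative E x) (at x within {a..b})"
      by (rule DERIV_subset[OF DE]) (use x ab in auto)
    then have "((\<lambda>s. D s - c * s) has_real_derivative (E x - c)) (at x within {a..b})"
      by (auto intro!: derivative_eq_intros)
    then show "((\<lambda>s. D s - c * s) has_derivative (\<lambda>h. (E x - c) * h)) (at x within {a..b})"
      by (simp add: has_field_derivative_def)
  qed
  then obtain x where x: "x \<in> {a<..<b}" "(D b - c*b) - (D a - c*a) = (E x - c) * (b - a)" by auto
  have "0 \<le> (E x - c) * (b - a)" using Ec[of x] x ab by auto
  then show ?thesis using x(2) by (simp add: algebra_simps)
qed

lemma Phi_deriv:
  assumes k: "k < n" and x: "x \<in> {0..1}"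
  shows "((\<lambda>s. Fc n (D s) k) has_real_derivative
      (- (real n * real ((n-1) choose k) * D x ^ k * (1 - D x)^(n-1-k)) * E x)) (at x within {0..1})"
  by (rule DERIV_chain'[OF DE[OF x] Fc_deriv[OF k]])


lemma kk:
  assumes n: "0 < n" and y: "y \<in> {0..1}"
  shows "real (nat \<lfloor>real n * D y\<rfloor>) / real n \<le> D y" "D y \<le> (real (nat \<lfloor>real n * D y\<rfloor>) + 1) / real n"
proof -
  have d: "0 \<le> D y" using D_bounds[OF y] by simp
  have fl: "real (nat \<lfloor>real n * D y\<rfloor>) = real_of_int \<lfloor>real n * D y\<rfloor>" using d by simp
  have "real_of_int \<lfloor>real n * D y\<rfloor> \<le> real n * D y" by (rule of_int_floor_le)
  then show "real (nat \<lfloor>real n * D y\<rfloor>) / real n \<le> D y" using n fl by (simp add: divide_le_eq mult.commute)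
  have "real n * D y < real_of_int \<lfloor>real n * D y\<rfloor> + 1" by (rule real_of_int_floor_add_one_gt)
  then show "D y \<le> (real (nat \<lfloor>real n * D y\<rfloor>) + 1) / real n" using n fl by (simp add: le_divide_eq mult.commute)
qed

lemma lim_point:
  assumes y: "y \<in> {0..1}" and x: "x \<in> {0..1}" and xy: "x \<noteq> y"
  shows "(\<lambda>n. Fc n (D x) (nat \<lfloor>real n * D y\<rfloor>)) \<longlonglongrightarrow> (if x < y then 1 else 0)"
proof -
  have px: "0 \<le> D x" "D x \<le> 1" using D_bounds[OF x] by auto
  show ?thesis
  proof (cases "x < y")
    case True
    define \<epsilon> where "\<epsilon> = D y - D x"
    have "c * (y - x) \<le> \<epsilon>" unfolding \<epsilon>_def by (rule Dmono) (use x y True in auto)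
    then have \<epsilon>: "\<epsilon> > 0" using cpos True by (smt (verit) mult_pos_pos)
    have ev: "eventually (\<lambda>n. 1 - (1 / (2*\<epsilon>^2)) / real n \<le> Fc n (D x) (nat \<lfloor>real n * D y\<rfloor>)) sequentially"
    proof (rule eventually_sequentiallyI[of 1])
      fix n :: nat assume "1 \<le> n"
      then have n: "0 < n" by simp
      have "1 - Fc n (D x) (nat \<lfloor>real n * D y\<rfloor>) \<le> exp (-2 * real n * \<epsilon>^2)"
        by (rule Fc_upper_tail[OF px n]) (use \<epsilon> kk(2)[OF n y] in \<open>auto simp: \<epsilon>_def\<close>)
      also have "\<dots> \<le> 1 / (2 * real n * \<epsilon>^2)" using exp_bound[of "2 * real n * \<epsilon>^2"] n \<epsilon> by simp
      also have "\<dots> = (1 / (2*\<epsilon>^2)) / real n" by simp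
      finally show "1 - (1 / (2*\<epsilon>^2)) / real n \<le> Fc n (D x) (nat \<lfloor>real n * D y\<rfloor>)" by simp
    qed
    have ev2: "eventually (\<lambda>n. Fc n (D x) (nat \<lfloor>real n * D y\<rfloor>) \<le> 1) sequentially"
      using Fc_bounds[OF px] by simp
    have l: "(\<lambda>n. 1 - (1 / (2*\<epsilon>^2)) / real n) \<longlonglongrightarrow> 1"
      using tendsto_diff[OF tendsto_const[of 1] lim_const_over_n[of "1 / (2*\<epsilon>^2)"]] by simp
    show ?thesis using True tendsto_sandwich[OF ev ev2 l tendsto_const] by simp
  next
    case False
    then have yx: "y < x" using xy by simp
    define \<epsilon> where "\<epsilon> = D x - D y"
    have "c * (x - y) \<le> \<epsilon>" unfolding \<epsilon>_def by (rule Dmono) (use x y yx in auto)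
    then have \<epsilon>: "\<epsilon> > 0" using cpos yx by (smt (verit) mult_pos_pos)
    have ev: "eventually (\<lambda>n. Fc n (D x) (nat \<lfloor>real n * D y\<rfloor>) \<le> (1 / (2*\<epsilon>^2)) / real n) sequentially"
    proof (rule eventually_sequentiallyI[of 1])
      fix n :: nat assume "1 \<le> n"
      then have n: "0 < n" by simp
      have "Fc n (D x) (nat \<lfloor>real n * D y\<rfloor>) \<le> exp (-2 * real n * \<epsilon>^2)"
        by (rule Fc_lower_tail[OF px n]) (use \<epsilon> kk(1)[OF n y] in \<open>auto simp: \<epsilon>_def\<close>)
      also have "\<dots> \<le> 1 / (2 * real n * \<epsilon>^2)" using exp_bound[of "2 * real n * \<epsilon>^2"] n \<epsilon> by simp
      also have "\<dots> = (1 / (2*\<epsilon>^2)) / real n" by simp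
      finally show "Fc n (D x) (nat \<lfloor>real n * D y\<rfloor>) \<le> (1 / (2*\<epsilon>^2)) / real n" .
    qed
    have ev2: "eventually (\<lambda>n. 0 \<le> Fc n (D x) (nat \<lfloor>real n * D y\<rfloor>)) sequentially"
      using Fc_bounds[OF px] by simp
    show ?thesis using False tendsto_sandwich[OF ev2 ev tendsto_const lim_const_over_n] by simp
  qed
qed


lemma int_lim:
  assumes y: "y \<in> {0..1}"
  shows "(\<lambda>n. integral {0..1} (\<lambda>s. Fc n (D s) (nat \<lfloor>real n * D y\<rfloor>))) \<longlonglongrightarrow> y"
proof -
  define f where "f n s = Fc n (D s) (nat \<lfloor>real n * D y\<rfloor>)" for n s
  define f' where "f' n s = (if s = y then 0 else f n s)" for n s
  define g where "g s = (if s < y then 1 else (0::real))" for s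
  have fi: "f n integrable_on {0..1}" for n
    unfolding f_def by (rule integrable_continuous_interval[OF Fc_D_cont[OF Dc]])
  have eq: "integral {0..1} (f n) = integral {0..1} (f' n)" for n
    by (rule integral_spike[of "{y}"]) (auto simp: f'_def)
  have f'i: "f' n integrable_on {0..1}" for n
    by (rule integrable_spike[OF fi, of "{y}"]) (auto simp: f'_def)
  have dc: "g integrable_on {0..1}" "(\<lambda>n. integral {0..1} (f' n)) \<longlonglongrightarrow> integral {0..1} g"
  proof -
    have le: "norm (f' n s) \<le> 1" if "s \<in> {0..1}" for n s
      using Fc_D_bounds[OF that, of n "nat \<lfloor>real n * D y\<rfloor>"] by (auto simp: f'_def f_def)
    have conv: "(\<lambda>n. f' n s) \<longlonglongrightarrow> g s" if "s \<in> {0..1}" for s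
    proof (cases "s = y")
      case True then show ?thesis by (simp add: f'_def g_def)
    next
      case False
      then show ?thesis using lim_point[OF y that False] by (simp add: f'_def f_def g_def)
    qed
    show "g integrable_on {0..1}" "(\<lambda>n. integral {0..1} (f' n)) \<longlonglongrightarrow> integral {0..1} g"
      using dominated_convergence[OF f'i integrable_const_ivl[of "1::real" 0 1] le conv] by auto
  qed
  have "integral {0..y} g + integral {y..1} g = integral {0..1} g"
    by (rule Henstock_Kurzweil_Integration.integral_combine) (use y dc(1) in auto)
  moreover have "integral {0..y} g = integral {0..y} (\<lambda>_::real. 1::real)"
    by (rule integral_spike[of "{y}"]) (auto simp: g_def)
  moreover have "integral {y..1} g = integral {y..1} (\<lambda>_::real. 0::real)"
    by (rule integral_cong) (auto simp: g_def)
  ultimately have "integral {0..1} g = y" using y by simp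
  then have "(\<lambda>n. integral {0..1} (f n)) \<longlonglongrightarrow> y" using dc(2) eq by simp
  then show ?thesis unfolding f_def by simp
qed

lemma prob01: "0 \<le> measure (model m) A" "measure (model m) A \<le> 1"
  using prob_space.prob_le_1[OF ps_model] by (auto simp: measure_nonneg)

lemma cp01: "0 \<le> cond_prob W n k u y" "cond_prob W n k u y \<le> 1" "0 \<le> c_n W n y" "c_n W n y \<le> 1"
  unfolding cond_prob_def c_n_def using prob01 by auto

lemma part2:
  assumes y: "y \<in> {0<..<1}" and u: "u \<in> {0..1}" and uy: "u \<noteq> y"
  shows "(\<forall>n\<ge>2. \<bar>H_star W n y u\<bar> \<le> 1) \<and>
         (\<lambda>n. H_star W n y u) \<longlonglongrightarrow> (if u \<le> y then 1 else 0) - y"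
proof
  show "\<forall>n\<ge>2. \<bar>H_star W n y u\<bar> \<le> 1"
    using cp01 unfolding H_star_def by (smt (verit))
  have y1: "y \<in> {0..1}" using y by auto
  have d: "0 \<le> D y" using D_bounds[OF y1] by simp
  have ev: "eventually (\<lambda>n. Fc n (D u) (nat \<lfloor>real n * D y\<rfloor>) - integral {0..1} (\<lambda>s. Fc n (D s) (nat \<lfloor>real n * D y\<rfloor>))
     = H_star W n y u) sequentially"
  proof (rule eventually_sequentiallyI[of 1])
    fix n :: nat assume "1 \<le> n" then have n: "0 < n" by simp
    show "Fc n (D u) (nat \<lfloor>real n * D y\<rfloor>) - integral {0..1} (\<lambda>s. Fc n (D s) (nat \<lfloor>real n * D y\<rfloor>)) = H_star W n y u"
      unfolding H_star_def R1[OF n d u] R2[OF n d Dc] ..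
  qed
  have "(\<lambda>n. Fc n (D u) (nat \<lfloor>real n * D y\<rfloor>) - integral {0..1} (\<lambda>s. Fc n (D s) (nat \<lfloor>real n * D y\<rfloor>)))
      \<longlonglongrightarrow> (if u < y then 1 else 0) - y"
    by (rule tendsto_diff[OF lim_point[OF y1 u uy] int_lim[OF y1]])
  then have "(\<lambda>n. H_star W n y u) \<longlonglongrightarrow> (if u < y then 1 else 0) - y"
    by (rule Lim_transform_eventually[OF _ ev])
  then show "(\<lambda>n. H_star W n y u) \<longlonglongrightarrow> (if u \<le> y then 1 else 0) - y"
    using uy by (simp add: less_le)
qed


lemma Econt: "continuous_on {0..1} E"
proof (rule lipschitz_on_continuous_on)
  show "M2-lipschitz_on {0..1} E"
    by (rule lipschitz_onI) (use Elip M2 in \<open>auto simp: dist_real_def\<close>)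
qed

lemma deriv_D: assumes y: "y \<in> {0<..<1}" shows "deriv D y = E y"
proof -
  have "(D has_real_derivative E y) (at y within {0..1})" using DE y by auto
  moreover have "at y within {0..1} = at y"
    by (rule at_within_interior) (use y in auto)
  ultimately have "(D has_real_derivative E y) (at y)" by simp
  then show ?thesis by (rule DERIV_imp_deriv)
qed

lemma div_mono_aux: "0 \<le> (A::real) \<Longrightarrow> 0 < c' \<Longrightarrow> c' \<le> e \<Longrightarrow> A / e \<le> A / c'"
  by (intro divide_left_mono) (auto intro: mult_pos_pos)

lemma g_lip:
  assumes u: "u \<in> {0..1}" and s: "s \<in> {0..1}" and y: "y \<in> {0..1}"
  shows "\<bar>(D s - W s u) / E s - (D y - W y u) / E y\<bar> \<le> (2 * M1 / c + M2 / c^2) * \<bar>s - y\<bar>"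
proof -
  define N where "N x = D x - W x u" for x
  have Es: "c \<le> E s" "E s > 0" and Ey: "c \<le> E y" "E y > 0" using Ec[OF s] Ec[OF y] cpos by auto
  have Ny: "\<bar>N y\<bar> \<le> 1" using D_bounds[OF y] Wb[OF y u] by (auto simp: N_def)
  have Nl: "\<bar>N s - N y\<bar> \<le> 2 * M1 * \<bar>s - y\<bar>"
    using D_lip[OF s y] Wlip[OF s y u] unfolding N_def by linarith
  have eq: "N s / E s - N y / E y = (N s - N y) / E s + N y * (E y - E s) / (E s * E y)"
    using Es Ey by (simp add: field_simps)
  have t1: "\<bar>(N s - N y) / E s\<bar> \<le> 2 * M1 / c * \<bar>s - y\<bar>"
  proof -
    have "\<bar>(N s - N y) / E s\<bar> = \<bar>N s - N y\<bar> / E s" using Es by simp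
    also have "\<dots> \<le> \<bar>N s - N y\<bar> / c" by (rule div_mono_aux) (use Es cpos in auto)
    also have "\<dots> \<le> 2 * M1 * \<bar>s - y\<bar> / c" by (rule divide_right_mono[OF Nl]) (use cpos in auto)
    finally show ?thesis by simp
  qed
  have t2: "\<bar>N y * (E y - E s) / (E s * E y)\<bar> \<le> M2 / c^2 * \<bar>s - y\<bar>"
  proof -
    have cc: "c * c \<le> E s * E y" using Es Ey cpos by (intro mult_mono) auto
    have "\<bar>N y * (E y - E s) / (E s * E y)\<bar> = \<bar>N y\<bar> * \<bar>E y - E s\<bar> / (E s * E y)"
      using Es Ey by (simp add: abs_mult)
    also have "\<dots> \<le> \<bar>N y\<bar> * \<bar>E y - E s\<bar> / (c * c)"
      by (rule div_mono_aux) (use cc cpos in auto)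
    also have "\<dots> \<le> 1 * (M2 * \<bar>s - y\<bar>) / (c * c)"
    proof (rule divide_right_mono)
      have "\<bar>E y - E s\<bar> \<le> M2 * \<bar>s - y\<bar>" using Elip[OF y s] by (simp add: abs_minus_commute)
      then show "\<bar>N y\<bar> * \<bar>E y - E s\<bar> \<le> 1 * (M2 * \<bar>s - y\<bar>)"
        using Ny by (intro mult_mono) auto
    qed (use cpos in auto)
    finally show ?thesis by (simp add: power2_eq_square)
  qed
  have "\<bar>N s / E s - N y / E y\<bar> \<le> 2 * M1 / c * \<bar>s - y\<bar> + M2 / c^2 * \<bar>s - y\<bar>"
    unfolding eq using t1 t2 abs_triangle_ineq[of "(N s - N y) / E s" "N y * (E y - E s) / (E s * E y)"] by linarith
  then show ?thesis by (simp add: N_def algebra_simps)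
qed


lemma Hn_rep:
  assumes n: "2 \<le> n" and y: "y \<in> {0..1}" and u: "u \<in> {0..1}"
  defines "k \<equiv> nat \<lfloor>real n * D y\<rfloor>"
  shows "H_n W n y u = integral {0..1} (\<lambda>s. ((D s - W s u) / E s) *
            (real n * real ((n-1) choose k) * D s ^ k * (1 - D s)^(n-1-k) * E s))"
proof -
  have n0: "0 < n" using n by simp
  have d: "0 \<le> D y" using D_bounds[OF y] by simp
  have Qc: "continuous_on {0..1} (\<lambda>s. Q2 (n-1) (D s) (W s u) k)"
    unfolding Q2_def by (cases "k = 0") (simp_all add: Fc_def, (intro continuous_intros Dc Wu_cont[OF u])+)
  have i1: "(\<lambda>s. Q2 (n-1) (D s) (W s u) k) integrable_on {0..1}" by (rule integrable_continuous_interval[OF Qc])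
  have i2: "(\<lambda>s. Fc n (D s) k) integrable_on {0..1}" by (rule integrable_continuous_interval[OF Fc_D_cont[OF Dc]])
  have "H_n W n y u = real n * (integral {0..1} (\<lambda>s. Q2 (n-1) (D s) (W s u) k) - integral {0..1} (\<lambda>s. Fc n (D s) k))"
    unfolding H_n_def R3[OF n d Dc u] R2[OF n0 d Dc] k_def ..
  also have "\<dots> = real n * integral {0..1} (\<lambda>s. Q2 (n-1) (D s) (W s u) k - Fc n (D s) k)"
    using integral_diff[OF i1 i2] by simp
  also have "\<dots> = integral {0..1} (\<lambda>s. real n * (Q2 (n-1) (D s) (W s u) k - Fc n (D s) k))"
    by simp
  also have "\<dots> = integral {0..1} (\<lambda>s. ((D s - W s u) / E s) *
            (real n * real ((n-1) choose k) * D s ^ k * (1 - D s)^(n-1-k) * E s))"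
  proof (rule integral_cong)
    fix s :: real assume s: "s \<in> {0..1}"
    have Es: "E s \<noteq> 0" using Ec[OF s] cpos by auto
    have "Fc n (D s) k = Fc (Suc (n-1)) (D s) k" using n by simp
    then have "Q2 (n-1) (D s) (W s u) k - Fc n (D s) k =
        (D s - W s u) * (real ((n-1) choose k) * D s^k * (1 - D s)^(n-1-k))"
      using QF[of "n-1" "D s" "W s u" k] by simp
    moreover have "((D s - W s u) / E s) * (real n * real ((n-1) choose k) * D s ^ k * (1 - D s)^(n-1-k) * E s)
       = real n * ((D s - W s u) * (real ((n-1) choose k) * D s^k * (1 - D s)^(n-1-k)))"
      using Es by (simp add: field_simps)
    ultimately show "real n * (Q2 (n-1) (D s) (W s u) k - Fc n (D s) k) = ((D s - W s u) / E s) *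
            (real n * real ((n-1) choose k) * D s ^ k * (1 - D s)^(n-1-k) * E s)"
      by simp
  qed
  finally show ?thesis .
qed


lemma part1:
  assumes y: "y \<in> {0<..<1}"
  shows "\<exists>C>0. \<forall>n\<ge>2. \<forall>u\<in>{0..1}.
            \<bar>H_n W n y u - (Dfun W y - W y u) / deriv (Dfun W) y\<bar> \<le> C * real n powr (-1/4)"
proof -
  have y1: "y \<in> {0..1}" using y by auto
  define m where "m = min y (1 - y)"
  have m: "0 < m" "m \<le> y" "m \<le> 1 - y" using y by (auto simp: m_def)
  define G where "G = 1 / c"
  define L where "L = 2 * M1 / c + M2 / c^2"
  define C1 where "C1 = L + 3 * G / c^2"
  define N0 where "N0 = 1 / m^4"
  define C2 where "C2 = (N0 + G) / m"
  define C where "C = max C1 C2 + 1"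
  have G0: "0 \<le> G" "0 < G" using cpos by (auto simp: G_def)
  have L0: "0 \<le> L" using cpos M1 M2 by (auto simp: L_def)
  have C1pos: "0 \<le> C1" using L0 G0 cpos by (auto simp: C1_def)
  have Cpos: "C > 0" using C1pos by (auto simp: C_def)
  have main: "\<bar>H_n W n y u - (Dfun W y - W y u) / deriv (Dfun W) y\<bar> \<le> C * real n powr (-1/4)"
    if n: "2 \<le> n" and u: "u \<in> {0..1}" for n u
  proof -
    have n0: "0 < n" using n by simp
    define t where "t = real n powr (1/4)"
    have t0: "0 < t" using n0 by (simp add: t_def)
    have t4: "t^4 = real n"
    proof -
      have "t^4 = t powr (real 4)" using t0 by (simp add: powr_realpow)
      also have "\<dots> = real n powr (1/4 * 4)" unfolding t_def by (simp add: powr_powr)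
      also have "\<dots> = real n" using n0 by simp
      finally show ?thesis .
    qed
    have t1: "1 \<le> t" using n0 by (simp add: t_def ge_one_powr_ge_zero)
    have tm: "real n powr (-1/4) = 1 / t" unfolding t_def using n0 by (simp add: powr_minus_divide)
    define gy where "gy = (D y - W y u) / E y"
    have gyb: "\<bar>gy\<bar> \<le> G"
    proof -
      have "\<bar>D y - W y u\<bar> \<le> 1" using D_bounds[OF y1] Wb[OF y1 u] by auto
      moreover have "c \<le> E y" by (rule Ec[OF y1])
      ultimately have "\<bar>D y - W y u\<bar> / E y \<le> 1 / c" using cpos
        by (meson div_mono_aux frac_le abs_ge_zero order_trans zero_le_one)
      then show ?thesis using Ec[OF y1] cpos by (simp add: gy_def G_def)
    qed
    have dy: "deriv (Dfun W) y = E y" by (rule deriv_D[OF y])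
    show ?thesis
    proof (cases "1 / t \<le> m")
      case True
      define \<delta> where "\<delta> = 1 / t"
      have \<delta>0: "0 < \<delta>" using t0 by (simp add: \<delta>_def)
      define a where "a = y - \<delta>"
      define b where "b = y + \<delta>"
      have ab: "0 \<le> a" "a \<le> y" "y \<le> b" "b \<le> 1" using True m \<delta>0 by (auto simp: a_def b_def \<delta>_def)
      have a1: "a \<in> {0..1}" and b1: "b \<in> {0..1}" using ab by auto
      define k where "k = nat \<lfloor>real n * D y\<rfloor>"
      have kn: "k < n"
      proof -
        have "D y \<le> 1 - e0" by (rule D_le[OF y1])
        then have "real n * D y < real n" using e0(1) n0 by simp
        then have "\<lfloor>real n * D y\<rfloor> < int n" by linarith
        then show ?thesis unfolding k_def using n0 by (simp add: nat_less_iff)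
      qed
      define \<rho> where "\<rho> s = real n * real ((n-1) choose k) * D s ^ k * (1 - D s)^(n-1-k) * E s" for s
      define g where "g s = (D s - W s u) / E s" for s
      define \<Phi> where "\<Phi> s = Fc n (D s) k" for s
      have Hr: "H_n W n y u = integral {0..1} (\<lambda>s. g s * \<rho> s)"
        unfolding g_def \<rho>_def k_def by (rule Hn_rep[OF n y1 u])
      have AL': "\<bar>integral {0..1} (\<lambda>s. g s * \<rho> s) - g y\<bar> \<le> L * \<delta> + 3 * G * ((1 - \<Phi> a) + \<Phi> b)"
      proof (rule AL[OF _ _ _ _ _ _ ab])
        fix s :: real assume s: "s \<in> {0..1}"
        show "(\<Phi> has_real_derivative - \<rho> s) (at s within {0..1})"
          unfolding \<Phi>_def \<rho>_def by (rule DERIV_cong[OF Phi_deriv[OF kn s]]) simp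
        show "0 \<le> \<rho> s" unfolding \<rho>_def using D_bounds[OF s] Ec[OF s] cpos by simp
        show "\<bar>g s\<bar> \<le> G"
        proof -
          have "\<bar>D s - W s u\<bar> \<le> 1" using D_bounds[OF s] Wb[OF s u] by auto
          then have "\<bar>D s - W s u\<bar> / E s \<le> 1 / c" using cpos Ec[OF s]
            by (meson div_mono_aux frac_le abs_ge_zero order_trans zero_le_one)
          then show ?thesis using Ec[OF s] cpos by (simp add: g_def G_def)
        qed
        show "\<bar>g s - g y\<bar> \<le> L * \<bar>s - y\<bar>" unfolding g_def L_def by (rule g_lip[OF u s y1])
        show "0 \<le> \<Phi> s \<and> \<Phi> s \<le> 1" unfolding \<Phi>_def by (rule Fc_D_bounds[OF s])
      next
        show "continuous_on {0..1} \<rho>" unfolding \<rho>_def by (intro continuous_intros Dc Econt)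
        show "continuous_on {0..1} g" unfolding g_def
          by (intro continuous_intros Dc Econt Wu_cont[OF u]) (use Ec cpos in fastforce)
      qed (use L0 in \<open>auto simp: a_def b_def\<close>)
      have ex: "exp (-2 * real n * (c * \<delta>)^2) \<le> 1 / (2 * c^2 * t)"
      proof -
        have "real n * (c * \<delta>)^2 = c^2 * t^2" unfolding \<delta>_def t4[symmetric] using t0 by (simp add: field_simps)
        then have "exp (-2 * real n * (c * \<delta>)^2) = exp (- (2 * c^2 * t^2))" by simp
        also have "\<dots> \<le> 1 / (2 * c^2 * t^2)" by (rule exp_bound) (use cpos t0 in simp)
        also have "\<dots> \<le> 1 / (2 * c^2 * t)"
        proof (rule divide_left_mono)
          show "2 * c^2 * t \<le> 2 * c^2 * t^2" using t1 cpos by (simp add: power2_eq_square)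
        qed (use cpos t0 in auto)
        finally show ?thesis .
      qed
      have pa: "0 \<le> D a" "D a \<le> 1" "0 \<le> D b" "D b \<le> 1" using D_bounds[OF a1] D_bounds[OF b1] by auto
      have ta: "1 - \<Phi> a \<le> exp (-2 * real n * (c * \<delta>)^2)"
        unfolding \<Phi>_def
      proof (rule Fc_upper_tail[OF pa(1,2) n0])
        show "0 \<le> c * \<delta>" using cpos \<delta>0 by simp
        have "c * (y - a) \<le> D y - D a" by (rule Dmono) (use ab in auto)
        then have "D a + c * \<delta> \<le> D y" by (simp add: a_def)
        then show "D a + c * \<delta> \<le> (real k + 1) / real n" using kk(2)[OF n0 y1] unfolding k_def by linarith
      qed
      have tb: "\<Phi> b \<le> exp (-2 * real n * (c * \<delta>)^2)"
        unfolding \<Phi>_def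
      proof (rule Fc_lower_tail[OF pa(3,4) n0])
        show "0 \<le> c * \<delta>" using cpos \<delta>0 by simp
        have "c * (b - y) \<le> D b - D y" by (rule Dmono) (use ab in auto)
        then have "D y \<le> D b - c * \<delta>" by (simp add: b_def)
        then show "real k / real n \<le> D b - c * \<delta>" using kk(1)[OF n0 y1] unfolding k_def by linarith
      qed
      have "3 * G * ((1 - \<Phi> a) + \<Phi> b) \<le> 3 * G * (2 * (1 / (2 * c^2 * t)))"
        using ta tb ex G0 by (intro mult_left_mono) auto
      also have "\<dots> = 3 * G / c^2 * (1 / t)" using cpos t0 by (simp add: field_simps)
      finally have tl: "3 * G * ((1 - \<Phi> a) + \<Phi> b) \<le> 3 * G / c^2 * (1 / t)" .
      have "\<bar>H_n W n y u - gy\<bar> \<le> C1 * (1 / t)"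
        using AL' tl unfolding Hr C1_def \<delta>_def gy_def g_def by (simp add: algebra_simps)
      also have "\<dots> \<le> C * (1 / t)" using t0 by (intro mult_right_mono) (auto simp: C_def)
      finally show ?thesis unfolding tm dy gy_def .
    next
      case False
      then have tlt: "t < 1 / m" using t0 m by (simp add: field_simps)
      have "real n < N0"
      proof -
        have "t^4 < (1/m)^4" by (rule power_strict_mono[OF tlt]) (use t0 in auto)
        then show ?thesis using t4 by (simp add: N0_def power_one_over)
      qed
      have Hb: "\<bar>H_n W n y u\<bar> \<le> real n"
      proof -
        have "\<bar>cond_prob W n 2 u y - c_n W n y\<bar> \<le> 1" using cp01(1,2)[of n 2 u y] cp01(3,4)[of n y] by linarith
        then show ?thesis unfolding H_n_def by (simp add: abs_mult mult_left_le)
      qed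
      have "\<bar>H_n W n y u - gy\<bar> \<le> N0 + G" using Hb gyb \<open>real n < N0\<close> by linarith
      also have "\<dots> \<le> C2 * (1 / t)"
      proof -
        have "1 \<le> 1 / (m * t)" using False m t0 by (simp add: field_simps)
        moreover have "0 \<le> N0 + G" using G0 m by (simp add: N0_def)
        ultimately have "(N0 + G) * 1 \<le> (N0 + G) * (1 / (m * t))" by (intro mult_left_mono) auto
        then show ?thesis by (simp add: C2_def)
      qed
      also have "\<dots> \<le> C * (1 / t)" using t0 by (intro mult_right_mono) (auto simp: C_def)
      finally show ?thesis unfolding tm dy gy_def .
    qed
  qed
  show ?thesis using Cpos main by blast
qed

end

theorem proposition8p2:
  fixes W :: "real \<Rightarrow> real \<Rightarrow> real"
  assumes "graphon W" and "regular_graphon W"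
  shows "(\<forall>y\<in>{0<..<1}. \<exists>C>0. \<forall>n\<ge>2. \<forall>u\<in>{0..1}.
            \<bar>H_n W n y u - (Dfun W y - W y u) / deriv (Dfun W) y\<bar> \<le> C * real n powr (-1/4))
       \<and> (\<forall>y\<in>{0<..<1}. \<forall>u\<in>{0..1}. u \<noteq> y \<longrightarrow>
            (\<forall>n\<ge>2. \<bar>H_star W n y u\<bar> \<le> 1) \<and>
            (\<lambda>n. H_star W n y u) \<longlonglongrightarrow> (if u \<le> y then 1 else 0) - y)"
proof -
  obtain E M1 M2 c where F: "c > 0" "M1 \<ge> 0" "M2 \<ge> 0" "continuous_on sq01 (\<lambda>(x,y). W x y)"
    "\<forall>x\<in>{0..1}. (Dfun W has_real_derivative E x) (at x within {0..1})"
    "\<forall>x\<in>{0..1}. c \<le> E x"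
    "\<forall>x\<in>{0..1}. \<forall>x'\<in>{0..1}. \<bar>E x - E x'\<bar> \<le> M2 * \<bar>x - x'\<bar>"
    "\<forall>x\<in>{0..1}. \<forall>x'\<in>{0..1}. \<forall>u\<in>{0..1}. \<bar>W x u - W x' u\<bar> \<le> M1 * \<bar>x - x'\<bar>"
    using reg_facts[OF assms] by blast
  obtain e0 where e0: "0 < e0" "\<forall>x\<in>{0..1}. \<forall>y\<in>{0..1}. W x y \<le> 1 - e0" "\<forall>x\<in>{0..1}. e0 \<le> Dfun W x"
    using assms(2) unfolding regular_graphon_def by blast
  have Wb: "\<And>x y. x \<in> {0..1} \<Longrightarrow> y \<in> {0..1} \<Longrightarrow> 0 \<le> W x y \<and> W x y \<le> 1"
    using assms(1) unfolding graphon_def by blast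
  interpret S: Setting W E M1 M2 c e0
    by unfold_locales (use F e0 Wb in auto)
  show ?thesis using S.part1 S.part2 by blast
qed


end
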